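(* Let $F$ be an algebraically closed field with $\operatorname{char}F>3$, $R=F[[x,y]]$, and let $f\in R^2$ be an isolated complete intersection singularity with $j_3(f)$ contact equivalent to $(x^3,\,xy^2)$. Then $f$ is contact equivalent to $(x^3+y^r,\,xy^2)$ for some $r\ge 4$.
   Context: $\mathfrak m=\langle x,y\rangle$. ICIS: $f_1,f_2\in\mathfrak m$ a regular sequence with $\mathfrak m^k\subset\langle f_1,f_2\rangle+I_2(J(f))$ for some $k$. $j_3(f)$ is the image in $R^2/\mathfrak m^4R^2$. Contact equivalence: $g=U\cdot\phi(f)$ with $U\in GL(2,R)$, $\phi\in\operatorname{Aut}(R)$ (for jets, taken modulo $\mathfrak m^4R^2$). *)

theory Defs
  imports "HOL-Computational_Algebra.Computational_Algebra"
begin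

text \<open>The ring R = F[[x,y]] is realised as F[[x]][[y]], i.e. the type 'a fps fps.
  The outer variable is y, the inner one is x.\<close>

type_synonym 'a ps2 = "'a fps fps"

definition alg_closed_type :: "'a::field itself \<Rightarrow> bool" where
  "alg_closed_type _ \<longleftrightarrow> (\<forall>p::'a poly. degree p \<ge> 1 \<longrightarrow> (\<exists>z. poly p z = 0))"

definition coeff2 :: "'a::comm_ring_1 ps2 \<Rightarrow> nat \<Rightarrow> nat \<Rightarrow> 'a" where
  "coeff2 g i j = (g $ j) $ i"   (* coefficient of x^i y^j *)

definition varX :: "'a::comm_ring_1 ps2" where "varX = fps_const fps_X"
definition varY :: "'a::comm_ring_1 ps2" where "varY = fps_X"

definition ideal_span :: "'b::comm_ring_1 set \<Rightarrow> 'b set" where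
  "ideal_span S = {s. \<exists>T c. finite T \<and> T \<subseteq> S \<and> s = (\<Sum>t\<in>T. c t * t)}"

definition ideal_pow :: "'b::comm_ring_1 set \<Rightarrow> nat \<Rightarrow> 'b set" where
  "ideal_pow I k = ideal_span {prod_list xs | xs. length xs = k \<and> set xs \<subseteq> I}"

definition maxid :: "'a::comm_ring_1 ps2 set" where
  "maxid = ideal_span {varX, varY}"

definition dX :: "'a::comm_ring_1 ps2 \<Rightarrow> 'a ps2" where
  "dX g = Abs_fps (\<lambda>j. fps_deriv (g $ j))"
definition dY :: "'a::comm_ring_1 ps2 \<Rightarrow> 'a ps2" where
  "dY g = fps_deriv g"

text \<open>Substitution g(p,q) for p, q in the maximal ideal (only meaningful there:
  then p^i q^j has order at least i+j, so the sum below is the full coefficient).\<close>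
definition subst2 :: "'a::comm_ring_1 ps2 \<Rightarrow> 'a ps2 \<Rightarrow> 'a ps2 \<Rightarrow> 'a ps2" where
  "subst2 g p q = Abs_fps (\<lambda>b. Abs_fps (\<lambda>a.
      \<Sum>i\<le>a+b. \<Sum>j\<le>a+b-i. coeff2 g i j * coeff2 (p ^ i * q ^ j) a b))"

definition is_aut :: "'a::comm_ring_1 ps2 \<Rightarrow> 'a ps2 \<Rightarrow> bool" where
  "is_aut p q \<longleftrightarrow> p \<in> maxid \<and> q \<in> maxid \<and> bij (\<lambda>g. subst2 g p q)"

definition is_GL2 :: "'b::comm_ring_1 \<Rightarrow> 'b \<Rightarrow> 'b \<Rightarrow> 'b \<Rightarrow> bool" where
  "is_GL2 u11 u12 u21 u22 \<longleftrightarrow> (\<exists>v11 v12 v21 v22.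
      u11*v11 + u12*v21 = 1 \<and> u11*v12 + u12*v22 = 0 \<and>
      u21*v11 + u22*v21 = 0 \<and> u21*v12 + u22*v22 = 1 \<and>
      v11*u11 + v12*u21 = 1 \<and> v11*u12 + v12*u22 = 0 \<and>
      v21*u11 + v22*u21 = 0 \<and> v21*u12 + v22*u22 = 1)"

definition contact_act ::
  "'a::comm_ring_1 ps2 \<times> 'a ps2 \<times> 'a ps2 \<times> 'a ps2 \<Rightarrow> 'a ps2 \<times> 'a ps2 \<Rightarrow> 'a ps2 \<times> 'a ps2 \<Rightarrow> 'a ps2 \<times> 'a ps2" where
  "contact_act U phi f = (case U of (u11,u12,u21,u22) \<Rightarrow>
     (let g1 = subst2 (fst f) (fst phi) (snd phi); g2 = subst2 (snd f) (fst phi) (snd phi)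
      in (u11*g1 + u12*g2, u21*g1 + u22*g2)))"

definition contact_equiv :: "'a::comm_ring_1 ps2 \<times> 'a ps2 \<Rightarrow> 'a ps2 \<times> 'a ps2 \<Rightarrow> bool" where
  "contact_equiv f g \<longleftrightarrow> (\<exists>u11 u12 u21 u22 p q. is_GL2 u11 u12 u21 u22 \<and> is_aut p q \<and>
      g = contact_act (u11,u12,u21,u22) (p,q) f)"

definition jet3_contact_equiv :: "'a::comm_ring_1 ps2 \<times> 'a ps2 \<Rightarrow> 'a ps2 \<times> 'a ps2 \<Rightarrow> bool" where
  "jet3_contact_equiv f g \<longleftrightarrow> (\<exists>u11 u12 u21 u22 p q. is_GL2 u11 u12 u21 u22 \<and> is_aut p q \<and>
      (let h = contact_act (u11,u12,u21,u22) (p,q) f in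
        fst g - fst h \<in> ideal_pow maxid 4 \<and> snd g - snd h \<in> ideal_pow maxid 4))"

definition regular_seq2 :: "'a::comm_ring_1 ps2 \<Rightarrow> 'a ps2 \<Rightarrow> bool" where
  "regular_seq2 f1 f2 \<longleftrightarrow> f1 \<in> maxid \<and> f2 \<in> maxid \<and>
     (\<forall>g. g * f1 = 0 \<longrightarrow> g = 0) \<and>
     (\<forall>g. g * f2 \<in> ideal_span {f1} \<longrightarrow> g \<in> ideal_span {f1}) \<and>
     ideal_span {f1, f2} \<noteq> UNIV"

text \<open>Jacobian 2x2 minor (the only one), generating I_2(J(f)).\<close>
definition jac_minor :: "'a::comm_ring_1 ps2 \<times> 'a ps2 \<Rightarrow> 'a ps2" where
  "jac_minor f = dX (fst f) * dY (snd f) - dY (fst f) * dX (snd f)"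

definition is_ICIS :: "'a::comm_ring_1 ps2 \<times> 'a ps2 \<Rightarrow> bool" where
  "is_ICIS f \<longleftrightarrow> regular_seq2 (fst f) (snd f) \<and>
     (\<exists>k. ideal_pow maxid k \<subseteq> ideal_span {fst f, snd f, jac_minor f})"

end

theory Submission
  imports Defs
begin


abbreviation cst :: "'a::comm_ring_1 \<Rightarrow> 'a ps2" where "cst c \<equiv> fps_const (fps_const c)"

lemma coeff2_add[simp]: "coeff2 (g + h) i j = coeff2 g i j + coeff2 h i j"
  by (simp add: coeff2_def)
lemma coeff2_diff[simp]: "coeff2 (g - h) i j = coeff2 g i j - coeff2 h i j"
  by (simp add: coeff2_def)
lemma coeff2_uminus[simp]: "coeff2 (- g) i j = - coeff2 g i j"
  by (simp add: coeff2_def)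
lemma coeff2_0[simp]: "coeff2 0 i j = 0"
  by (simp add: coeff2_def)
lemma coeff2_1: "coeff2 1 i j = (if i = 0 \<and> j = 0 then 1 else 0)"
  by (simp add: coeff2_def)
lemma coeff2_cst: "coeff2 (cst c) i j = (if i = 0 \<and> j = 0 then c else 0)"
  by (simp add: coeff2_def)
lemma coeff2_cst_mult[simp]: "coeff2 (cst c * g) i j = c * coeff2 g i j"
  by (simp add: coeff2_def)
lemma coeff2_sum: "coeff2 (sum F A) i j = (\<Sum>a\<in>A. coeff2 (F a) i j)"
  by (induction A rule: infinite_finite_induct) (auto simp: coeff2_def)

lemma coeff2_mult: "coeff2 (g * h) a b = (\<Sum>j\<le>b. \<Sum>i\<le>a. coeff2 g i j * coeff2 h (a - i) (b - j))"
proof -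
  have "(g * h) $ b = (\<Sum>j=0..b. g$j * h$(b - j))" by (rule fps_mult_nth)
  hence "((g * h) $ b) $ a = (\<Sum>j=0..b. (g$j * h$(b - j)) $ a)"
    by (simp add: fps_sum_nth)
  also have "\<dots> = (\<Sum>j\<le>b. \<Sum>i\<le>a. coeff2 g i j * coeff2 h (a - i) (b - j))"
    by (simp add: fps_mult_nth coeff2_def atLeast0AtMost)
  finally show ?thesis by (simp add: coeff2_def)
qed

lemma varX_pow: "varX ^ i = fps_const (fps_X ^ i)"
  by (simp add: varX_def fps_const_power)

lemma coeff2_Xpow_mult: "coeff2 ((varX::'a::comm_ring_1 ps2) ^ i * g) a b = (if a < i then 0 else coeff2 g (a - i) b)"
  by (simp add: varX_pow coeff2_def fps_X_power_mult_nth)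

lemma coeff2_Ypow_mult: "coeff2 ((varY::'a::comm_ring_1 ps2) ^ i * g) a b = (if b < i then 0 else coeff2 g a (b - i))"
  by (simp add: varY_def coeff2_def fps_X_power_mult_nth)

lemma coeff2_X_mult: "coeff2 ((varX::'a::comm_ring_1 ps2) * g) a b = (if a = 0 then 0 else coeff2 g (a - 1) b)"
  using coeff2_Xpow_mult[of 1 g a b] by auto

lemma coeff2_Y_mult: "coeff2 ((varY::'a::comm_ring_1 ps2) * g) a b = (if b = 0 then 0 else coeff2 g a (b - 1))"
  using coeff2_Ypow_mult[of 1 g a b] by auto

lemma coeff2_mono: "coeff2 ((varX::'a::comm_ring_1 ps2) ^ i * varY ^ j) a b = (if a = i \<and> b = j then 1 else 0)"
  by (auto simp: coeff2_Xpow_mult coeff2_Ypow_mult[where g=1, simplified] coeff2_1)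



definition low0 :: "nat \<Rightarrow> 'a::comm_ring_1 ps2 \<Rightarrow> bool" where
  "low0 n g \<longleftrightarrow> (\<forall>i j. i + j < n \<longrightarrow> coeff2 g i j = 0)"

lemma low0D: "low0 n g \<Longrightarrow> i + j < n \<Longrightarrow> coeff2 g i j = 0"
  by (simp add: low0_def)

lemma low0_0[simp]: "low0 0 g" and low0_zero[simp]: "low0 n 0"
  by (auto simp: low0_def)

lemma low0_add[intro]: "low0 n g \<Longrightarrow> low0 n h \<Longrightarrow> low0 n (g + h)"
  and low0_diff[intro]: "low0 n g \<Longrightarrow> low0 n h \<Longrightarrow> low0 n (g - h)"
  and low0_uminus[intro]: "low0 n g \<Longrightarrow> low0 n (- g)"
  by (auto simp: low0_def)

lemma low0_mono: "low0 n g \<Longrightarrow> m \<le> n \<Longrightarrow> low0 m g"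
  by (auto simp: low0_def)

lemma low0_mult: 
  assumes "low0 n g" "low0 m h" shows "low0 (n + m) (g * h)"
  unfolding low0_def
proof (intro allI impI)
  fix a b assume ab: "a + b < n + m"
  have "coeff2 g i j * coeff2 h (a - i) (b - j) = 0" if "i \<le> a" "j \<le> b" for i j
  proof (cases "i + j < n")
    case True thus ?thesis using assms(1) by (simp add: low0_def)
  next
    case False
    hence "(a - i) + (b - j) < m" using ab that by linarith
    thus ?thesis using assms(2) by (simp add: low0_def)
  qed
  thus "coeff2 (g * h) a b = 0" by (simp add: coeff2_mult)
qed

lemma low0_mult_left: "low0 n h \<Longrightarrow> low0 n (g * h)"
  using low0_mult[of 0 g n h] by simp
lemma low0_mult_right: "low0 n g \<Longrightarrow> low0 n (g * h)"
  using low0_mult[of n g 0 h] by simp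

lemma low0_mult_ge: "low0 n g \<Longrightarrow> low0 m h \<Longrightarrow> k \<le> n + m \<Longrightarrow> low0 k (g * h)"
  using low0_mult low0_mono by blast

lemma low0_power: "low0 n g \<Longrightarrow> low0 (n * k) (g ^ k)"
  by (induction k) (auto simp: low0_mult add.commute intro: low0_mono dest: low0_mult)

lemma low0_sum: "(\<And>a. a \<in> A \<Longrightarrow> low0 n (F a)) \<Longrightarrow> low0 n (sum F A)"
  by (induction A rule: infinite_finite_induct) auto

lemma low0_X: "low0 1 (varX::'a::comm_ring_1 ps2)"
  by (auto simp: low0_def coeff2_def varX_def)
lemma low0_Y: "low0 1 (varY::'a::comm_ring_1 ps2)"
  by (auto simp: low0_def coeff2_def varY_def)

lemma low0_Xpow_mult: "low0 n g \<Longrightarrow> low0 (n + i) ((varX::'a::comm_ring_1 ps2) ^ i * g)"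
  by (auto simp: low0_def coeff2_Xpow_mult)
lemma low0_Ypow_mult: "low0 n g \<Longrightarrow> low0 (n + i) ((varY::'a::comm_ring_1 ps2) ^ i * g)"
  by (auto simp: low0_def coeff2_Ypow_mult)
lemma low0_Xpow: "low0 i ((varX::'a::comm_ring_1 ps2) ^ i)"
  using low0_Xpow_mult[of 0 1 i] by simp
lemma low0_Ypow: "low0 i ((varY::'a::comm_ring_1 ps2) ^ i)"
  using low0_Ypow_mult[of 0 1 i] by simp

lemma low0_eq0: "(\<And>n. low0 n g) \<Longrightarrow> g = 0"
proof -
  assume h: "\<And>n. low0 n g"
  have "coeff2 g i j = 0" for i j using h[of "i+j+1"] by (simp add: low0_def)
  thus "g = 0" unfolding coeff2_def by (intro fps_ext) simp
qed

lemma coeff2_ext: "(\<And>i j. coeff2 g i j = coeff2 h i j) \<Longrightarrow> g = h"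
  unfolding coeff2_def by (intro fps_ext) simp

lemma low0_eqI: "(\<And>n. low0 (Suc n) (g - h)) \<Longrightarrow> g = h"
  using low0_eq0[of "g - h"] low0_mono by (metis Suc_n_not_le_n eq_iff_diff_eq_0 nat_le_linear)

lemma low0_cst_mult: "low0 n g \<Longrightarrow> low0 n (cst c * g)"
  by (simp add: low0_def)



definition mon :: "nat \<Rightarrow> nat \<Rightarrow> 'a::comm_ring_1 ps2" where
  "mon i j = varX ^ i * varY ^ j"

definition tri :: "nat \<Rightarrow> (nat \<times> nat) set" where
  "tri n = {(i, j). i + j \<le> n}"

lemma finite_tri[simp]: "finite (tri n)"
  by (rule finite_subset[of _ "{..n} \<times> {..n}"]) (auto simp: tri_def)

definition trunc :: "nat \<Rightarrow> 'a::comm_ring_1 ps2 \<Rightarrow> 'a ps2" where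
  "trunc n g = (\<Sum>(i,j)\<in>tri n. cst (coeff2 g i j) * mon i j)"

lemma coeff2_mon: "coeff2 (mon i j :: 'a::comm_ring_1 ps2) a b = (if a = i \<and> b = j then 1 else 0)"
  by (simp add: mon_def coeff2_mono)

lemma coeff2_trunc: "coeff2 (trunc n g) a b = (if a + b \<le> n then coeff2 g a b else 0)"
proof -
  have "coeff2 (trunc n g) a b = (\<Sum>(i,j)\<in>tri n. coeff2 g i j * (if a = i \<and> b = j then 1 else 0))"
    by (simp add: trunc_def coeff2_sum case_prod_beta coeff2_mon)
  also have "\<dots> = (\<Sum>u\<in>tri n. if u = (a,b) then coeff2 g a b else 0)"
    by (intro sum.cong refl) fastforce
  also have "\<dots> = (if a + b \<le> n then coeff2 g a b else 0)"
    by (subst sum.delta[OF finite_tri]) (auto simp: tri_def)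
  finally show ?thesis .
qed

lemma low0_trunc: "low0 (Suc n) (g - trunc n g)"
  by (simp add: low0_def coeff2_trunc)

lemma low0_mon: "low0 (i + j) (mon i j)"
  unfolding mon_def using low0_mult[OF low0_Xpow low0_Ypow] .

section \<open>Substitution\<close>

lemma coeff2_subst2: "coeff2 (subst2 g p q) a b =
   (\<Sum>i\<le>a+b. \<Sum>j\<le>a+b-i. coeff2 g i j * coeff2 (p ^ i * q ^ j) a b)"
  by (simp add: subst2_def coeff2_def)

lemma subst2_add: "subst2 (g + h) p q = subst2 g p q + subst2 h p q"
  by (rule coeff2_ext) (simp add: coeff2_subst2 algebra_simps sum.distrib)

lemma subst2_cst_mult: "subst2 (cst c * g) p q = cst c * subst2 g p q"
  by (rule coeff2_ext) (simp add: coeff2_subst2 sum_distrib_left mult.assoc)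

lemma subst2_uminus: "subst2 (- g) p q = - subst2 g p q"
  by (rule coeff2_ext) (simp add: coeff2_subst2 sum_negf)

lemma subst2_diff: "subst2 (g - h) p q = subst2 g p q - subst2 h p q"
  using subst2_add[of g "-h" p q] by (simp add: subst2_uminus)

lemma subst2_zero: "subst2 0 p q = 0"
  by (rule coeff2_ext) (simp add: coeff2_subst2)

lemma subst2_sum: "subst2 (sum F A) p q = (\<Sum>a\<in>A. subst2 (F a) p q)"
  by (induction A rule: infinite_finite_induct) (auto simp: subst2_zero subst2_add)

lemma subst2_preserve: "low0 n g \<Longrightarrow> low0 n (subst2 g p q)"
  unfolding low0_def by (auto simp: coeff2_subst2 intro!: sum.neutral)

lemma low0_pq: "low0 1 p \<Longrightarrow> low0 1 q \<Longrightarrow> low0 (i + j) (p ^ i * q ^ j)"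
  using low0_mult[OF low0_power[of 1 p i] low0_power[of 1 q j]] by simp

lemma subst2_mon:
  assumes "low0 1 p" "low0 1 q"
  shows "subst2 (mon i j) p q = p ^ i * q ^ j"
proof (rule coeff2_ext)
  fix a b
  have "coeff2 (subst2 (mon i j) p q) a b =
     (\<Sum>i'\<le>a+b. \<Sum>j'\<le>a+b-i'. (if i' = i \<and> j' = j then coeff2 (p ^ i * q ^ j) a b else 0))"
    by (simp add: coeff2_subst2 coeff2_mon if_distrib cong: if_cong) (auto intro!: sum.cong)
  also have "\<dots> = (\<Sum>i'\<le>a+b. if i' = i then (if j \<le> a + b - i then coeff2 (p ^ i * q ^ j) a b else 0) else 0)"
  proof (intro sum.cong refl)
    fix x assume "x \<in> {..a+b}"
    show "(\<Sum>j'\<le>a + b - x. if x = i \<and> j' = j then coeff2 (p ^ i * q ^ j) a b else 0) =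
      (if x = i then (if j \<le> a + b - i then coeff2 (p ^ i * q ^ j) a b else 0) else 0)"
    proof (cases "x = i")
      case True thus ?thesis by (simp add: sum.delta')
    qed simp
  qed
  also have "\<dots> = (if i + j \<le> a + b then coeff2 (p ^ i * q ^ j) a b else 0)"
    by (subst sum.delta) auto
  also have "\<dots> = coeff2 (p ^ i * q ^ j) a b"
    using low0_pq[OF assms, of i j] by (auto simp: low0_def)
  finally show "coeff2 (subst2 (mon i j) p q) a b = coeff2 (p ^ i * q ^ j) a b" .
qed

lemma subst2_trunc:
  assumes "low0 1 p" "low0 1 q"
  shows "subst2 (trunc n g) p q = (\<Sum>(i,j)\<in>tri n. cst (coeff2 g i j) * (p ^ i * q ^ j))"
  by (simp add: trunc_def subst2_sum case_prod_beta subst2_cst_mult subst2_mon[OF assms])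

lemma subst2_approx: "low0 (Suc n) (subst2 g p q - subst2 (trunc n g) p q)"
  using subst2_preserve[OF low0_trunc[of n g]] by (simp add: subst2_diff)

lemma mon_mult: "mon i j * mon k l = (mon (i + k) (j + l) :: 'a::comm_ring_1 ps2)"
  by (simp add: mon_def power_add algebra_simps)

lemma cst_mult_cst: "cst a * cst b = (cst (a * b) :: 'a::comm_ring_1 ps2)"
  by simp

lemma subst2_trunc_mult:
  assumes "low0 1 p" "low0 1 q"
  shows "subst2 (trunc n g * trunc n h) p q = subst2 (trunc n g) p q * subst2 (trunc n h) p q"
proof -
  have e: "trunc n g * trunc n h = (\<Sum>u\<in>tri n. \<Sum>v\<in>tri n.
      cst (coeff2 g (fst u) (snd u) * coeff2 h (fst v) (snd v)) * mon (fst u + fst v) (snd u + snd v))"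
    unfolding trunc_def sum_product
    by (intro sum.cong refl) (simp add: case_prod_beta mon_mult[symmetric] algebra_simps)
  show ?thesis
    unfolding e subst2_trunc[OF assms] sum_product
    by (simp only: subst2_sum subst2_cst_mult subst2_mon[OF assms])
       (intro sum.cong refl, simp add: case_prod_beta power_add algebra_simps)
qed

lemma low0_prod_diff:
  assumes "low0 n (a - a')" "low0 n (b - b')"
  shows "low0 n (a * b - a' * b')"
proof -
  have "a * b - a' * b' = (a - a') * b + a' * (b - b')" by (simp add: algebra_simps)
  thus ?thesis using assms by (simp add: low0_add low0_mult_left low0_mult_right)
qed

lemma subst2_mult:
  assumes "low0 1 p" "low0 1 q"
  shows "subst2 (g * h) p q = subst2 g p q * subst2 h p q"
proof (rule low0_eqI)
  fix n
  let ?G = "trunc n g" and ?H = "trunc n h"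
  have "low0 (Suc n) (g * h - ?G * ?H)"
    using low0_prod_diff low0_trunc by blast
  hence 1: "low0 (Suc n) (subst2 (g * h) p q - subst2 (?G * ?H) p q)"
    using subst2_preserve by (metis subst2_diff)
  have 2: "low0 (Suc n) (subst2 ?G p q * subst2 ?H p q - subst2 g p q * subst2 h p q)"
    using low0_prod_diff[of "Suc n"] subst2_approx
    by (metis low0_uminus minus_diff_eq)
  show "low0 (Suc n) (subst2 (g * h) p q - subst2 g p q * subst2 h p q)"
    using low0_add[OF 1 2] by (simp add: subst2_trunc_mult[OF assms])
qed



lemma mon00: "mon 0 0 = 1" and mon10: "mon 1 0 = varX" and mon01: "mon 0 1 = varY"
  by (simp_all add: mon_def)

context
  fixes p q :: "'a::comm_ring_1 ps2"
  assumes pq: "low0 1 p" "low0 1 q"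
begin

lemma subst2_one: "subst2 1 p q = 1"
  using subst2_mon[OF pq, of 0 0] by (simp add: mon00)

lemma subst2_cst: "subst2 (cst c) p q = cst c"
  using subst2_cst_mult[of c 1 p q] by (simp add: subst2_one)

lemma subst2_X: "subst2 varX p q = p"
  using subst2_mon[OF pq, of 1 0, unfolded mon10] by simp

lemma subst2_Y: "subst2 varY p q = q"
  using subst2_mon[OF pq, of 0 1, unfolded mon01] by simp

lemma subst2_power: "subst2 (g ^ n) p q = subst2 g p q ^ n"
  by (induction n) (simp_all add: subst2_one subst2_mult[OF pq])

lemma subst2_low1: "low0 1 g \<Longrightarrow> low0 1 (subst2 g p q)"
  by (rule subst2_preserve)

end

lemma subst2_id: "subst2 g varX varY = g"
proof (rule low0_eqI)
  fix n
  have "subst2 (trunc n g) varX varY = trunc n g"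
    by (simp only: subst2_trunc[OF low0_X low0_Y]) (simp add: trunc_def mon_def)
  thus "low0 (Suc n) (subst2 g varX varY - g)"
  proof -
    have "subst2 g varX varY - g = (subst2 g varX varY - subst2 (trunc n g) varX varY) - (g - trunc n g)"
      using \<open>subst2 (trunc n g) varX varY = trunc n g\<close> by simp
    thus ?thesis using subst2_approx[of n g varX varY] low0_trunc[of n g] by (simp only: low0_diff)
  qed
qed

lemma subst2_comp:
  assumes pq: "low0 1 p" "low0 1 q" and PQ: "low0 1 P" "low0 1 Q"
  shows "subst2 (subst2 g p q) P Q = subst2 g (subst2 p P Q) (subst2 q P Q)"
proof (rule low0_eqI)
  fix n
  have pq': "low0 1 (subst2 p P Q)" "low0 1 (subst2 q P Q)"
    using pq by (simp_all add: subst2_preserve)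
  have e: "subst2 (subst2 (trunc n g) p q) P Q = subst2 (trunc n g) (subst2 p P Q) (subst2 q P Q)"
    unfolding subst2_trunc[OF pq] subst2_trunc[OF pq'] subst2_sum
    by (intro sum.cong refl) (simp only: case_prod_beta subst2_cst[OF PQ] subst2_mult[OF PQ] subst2_power[OF PQ])
  have 1: "low0 (Suc n) (subst2 (subst2 g p q) P Q - subst2 (subst2 (trunc n g) p q) P Q)"
    using subst2_preserve[OF subst2_approx[of n g p q]] by (simp add: subst2_diff)
  have 2: "low0 (Suc n) (subst2 g (subst2 p P Q) (subst2 q P Q) - subst2 (trunc n g) (subst2 p P Q) (subst2 q P Q))"
    by (rule subst2_approx)
  show "low0 (Suc n) (subst2 (subst2 g p q) P Q - subst2 g (subst2 p P Q) (subst2 q P Q))"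
    using low0_diff[OF 1 2] by (simp add: e)
qed

lemma low0_power_diff:
  assumes "low0 1 a" "low0 (k + 1) (a - b)"
  shows "low0 (i + k) (a ^ i - b ^ i)"
proof (induction i)
  case (Suc i)
  have "low0 1 (a - (a - b))" using low0_diff[OF assms(1) low0_mono[OF assms(2), of 1]] by simp
  hence lb: "low0 1 b" by simp
  have "a ^ Suc i - b ^ Suc i = a * (a ^ i - b ^ i) + (a - b) * b ^ i"
    by (simp add: algebra_simps)
  moreover have "low0 (Suc i + k) (a * (a ^ i - b ^ i))"
    using low0_mult[OF assms(1) Suc] by simp
  moreover have "low0 (Suc i + k) ((a - b) * b ^ i)"
    using low0_mult[OF assms(2) low0_power[OF lb, of i]] by (simp add: ac_simps)
  ultimately show ?case by (simp add: low0_add)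
qed simp

lemma subst2_close:
  assumes p: "low0 (k + 1) (p - varX)" and q: "low0 (k + 1) (q - varY)" and z: "low0 n z"
  shows "low0 (n + k) (subst2 z p q - z)"
proof -
  have "low0 1 (p - varX + varX)" by (rule low0_add[OF low0_mono[OF p] low0_X]) simp
  hence lp: "low0 1 p" by simp
  have "low0 1 (q - varY + varY)" by (rule low0_add[OF low0_mono[OF q] low0_Y]) simp
  hence lq: "low0 1 q" by simp
  let ?M = "n + k"
  have t: "low0 (n + k) (subst2 (trunc ?M z) p q - trunc ?M z)"
  proof -
    have se: "subst2 (trunc ?M z) p q - trunc ?M z =
        (\<Sum>(i,j)\<in>tri ?M. cst (coeff2 z i j) * (p ^ i * q ^ j - mon i j))"
      unfolding subst2_trunc[OF lp lq] unfolding trunc_def sum_subtractf[symmetric]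
      by (intro sum.cong refl) (simp only: case_prod_beta right_diff_distrib)
    have each: "low0 (n + k) (cst (coeff2 z i j) * (p ^ i * q ^ j - mon i j))" for i j
    proof (cases "i + j < n")
      case True
      hence "coeff2 z i j = 0" using z by (simp add: low0_def)
      thus ?thesis by simp
    next
      case False
      have eq: "p ^ i * q ^ j - mon i j = p ^ i * (q ^ j - varY ^ j) + (p ^ i - varX ^ i) * varY ^ j"
        by (simp add: mon_def algebra_simps)
      have a1: "low0 (i + (j + k)) (p ^ i * (q ^ j - varY ^ j))"
        by (rule low0_mult[OF low0_power[OF lp, of i] low0_power_diff[OF lq q, of j], simplified])
      have a2: "low0 ((i + k) + j) ((p ^ i - varX ^ i) * varY ^ j)"
        by (rule low0_mult[OF low0_power_diff[OF lp p, of i] low0_Ypow[of j]])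
      have "low0 (n + k) (p ^ i * (q ^ j - varY ^ j))"
        by (rule low0_mono[OF a1]) (use False in linarith)
      moreover have "low0 (n + k) ((p ^ i - varX ^ i) * varY ^ j)"
        by (rule low0_mono[OF a2]) (use False in linarith)
      ultimately have "low0 (n + k) (p ^ i * q ^ j - mon i j)"
        unfolding eq by (rule low0_add)
      thus ?thesis by (rule low0_cst_mult)
    qed
    show ?thesis unfolding se by (rule low0_sum) (auto simp: each)
  qed
  have e: "subst2 z p q - z = (subst2 z p q - subst2 (trunc ?M z) p q) - (z - trunc ?M z)
       + (subst2 (trunc ?M z) p q - trunc ?M z)" by simp
  have 1: "low0 (n + k) (subst2 z p q - subst2 (trunc ?M z) p q)"
    by (rule low0_mono[OF subst2_approx]) simp
  have 2: "low0 (n + k) (z - trunc ?M z)"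
    by (rule low0_mono[OF low0_trunc]) simp
  show ?thesis unfolding e by (rule low0_add[OF low0_diff[OF 1 2] t])
qed



lemma ofnat_ps2: "(of_nat n :: 'a::comm_ring_1 ps2) = cst (of_nat n)"
  by (simp add: fps_of_nat)

lemma dX_nth: "dX g $ j = fps_deriv (g $ j)"
  by (simp add: dX_def)

lemma coeff2_dX: "coeff2 (dX g) i j = of_nat (i + 1) * coeff2 g (i + 1) j"
  by (simp add: coeff2_def dX_nth)

lemma coeff2_dY: "coeff2 (dY g) i j = of_nat (j + 1) * coeff2 g i (j + 1)"
proof -
  have "(dY g) $ j = of_nat (j + 1) * g $ (j + 1)" by (simp add: dY_def)
  thus ?thesis by (simp add: coeff2_def fps_of_nat[symmetric])
qed

lemma dX_add: "dX (g + h) = dX g + dX h"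
  by (rule fps_ext) (simp add: dX_nth)
lemma dX_uminus: "dX (- g) = - dX g"
  by (rule fps_ext) (simp add: dX_nth fps_deriv_neg)
lemma dX_diff: "dX (g - h) = dX g - dX h"
  by (rule fps_ext) (simp add: dX_nth fps_deriv_sub)
lemma dX_zero: "dX 0 = 0"
  by (rule fps_ext) (simp add: dX_nth)
lemma dX_sum: "dX (sum F A) = (\<Sum>a\<in>A. dX (F a))"
  by (induction A rule: infinite_finite_induct) (auto simp: dX_zero dX_add)

lemma dX_mult: "dX (g * h) = dX g * h + g * dX h"
proof (rule fps_ext)
  fix j
  show "dX (g * h) $ j = (dX g * h + g * dX h) $ j"
    by (simp add: dX_nth fps_mult_nth fps_deriv_sum sum.distrib)
qed

lemma dY_add: "dY (g + h) = dY g + dY h" by (simp add: dY_def)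
lemma dY_diff: "dY (g - h) = dY g - dY h" by (simp add: dY_def fps_deriv_sub)
lemma dY_uminus: "dY (- g) = - dY g" by (simp add: dY_def fps_deriv_neg)
lemma dY_zero: "dY 0 = 0" by (simp add: dY_def)
lemma dY_sum: "dY (sum F A) = (\<Sum>a\<in>A. dY (F a))" by (simp add: dY_def fps_deriv_sum)
lemma dY_mult: "dY (g * h) = dY g * h + g * dY h" by (simp add: dY_def)

lemma dX_cst: "dX (cst c) = 0"
  by (rule coeff2_ext) (simp add: coeff2_dX coeff2_cst)
lemma dY_cst: "dY (cst c) = 0"
  by (rule coeff2_ext) (simp add: coeff2_dY coeff2_cst)
lemma dX_one: "dX 1 = 0" using dX_cst[of 1] by simp
lemma dY_one: "dY 1 = 0" using dY_cst[of 1] by simp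
lemma coeff2_X: "coeff2 (varX::'a::comm_ring_1 ps2) a b = (if a = 1 \<and> b = 0 then 1 else 0)"
  using coeff2_mono[of 1 0 a b] by simp
lemma coeff2_Y: "coeff2 (varY::'a::comm_ring_1 ps2) a b = (if a = 0 \<and> b = 1 then 1 else 0)"
  using coeff2_mono[of 0 1 a b] by simp
lemma dX_X: "dX varX = 1"
  by (rule coeff2_ext) (simp only: coeff2_dX coeff2_1 coeff2_X, simp)
lemma dY_Y: "dY varY = 1"
  by (simp add: dY_def varY_def)
lemma dX_Y: "dX varY = 0"
  by (rule coeff2_ext) (simp only: coeff2_dX coeff2_0 coeff2_Y, simp)
lemma dY_X: "dY varX = 0"
  by (simp add: dY_def varX_def)

lemma dX_cst_mult: "dX (cst c * g) = cst c * dX g" by (simp add: dX_mult dX_cst)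
lemma dY_cst_mult: "dY (cst c * g) = cst c * dY g" by (simp add: dY_mult dY_cst)

lemma dX_power: "dX (g ^ n) = of_nat n * g ^ (n - 1) * dX g"
proof (induction n)
  case 0 thus ?case by (simp add: dX_one)
next
  case (Suc n) thus ?case by (cases n) (simp_all add: dX_mult algebra_simps)
qed

lemma dY_power: "dY (g ^ n) = of_nat n * g ^ (n - 1) * dY g"
proof (induction n)
  case 0 thus ?case by (simp add: dY_one)
next
  case (Suc n) thus ?case by (cases n) (simp_all add: dY_mult algebra_simps)
qed

lemma low0_dX: "low0 (Suc n) g \<Longrightarrow> low0 n (dX g)"
  by (simp add: low0_def coeff2_dX)
lemma low0_dY: "low0 (Suc n) g \<Longrightarrow> low0 n (dY g)"
  by (simp add: low0_def coeff2_dY)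

lemma subst2_ofnat_mult: "subst2 (of_nat n * g) p q = of_nat n * subst2 g p q"
  by (simp only: ofnat_ps2 subst2_cst_mult)

lemma chain_mon:
  assumes pq: "low0 1 p" "low0 1 q"
  shows "dX (subst2 (mon i j) p q) = subst2 (dX (mon i j)) p q * dX p + subst2 (dY (mon i j)) p q * dX q"
    and "dY (subst2 (mon i j) p q) = subst2 (dX (mon i j)) p q * dY p + subst2 (dY (mon i j)) p q * dY q"
proof -
  have mx: "dX (mon i j) = of_nat i * mon (i - 1) j"
    by (simp add: mon_def dX_mult dX_power dX_X dX_Y dY_X dX_zero power_0_left algebra_simps)
  have my: "dY (mon i j) = of_nat j * mon i (j - 1)"
    by (simp add: mon_def dY_mult dY_power dY_X dY_Y algebra_simps)
  show "dX (subst2 (mon i j) p q) = subst2 (dX (mon i j)) p q * dX p + subst2 (dY (mon i j)) p q * dX q"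
    unfolding mx my subst2_mon[OF pq] subst2_ofnat_mult
    by (simp add: dX_mult dX_power algebra_simps)
  show "dY (subst2 (mon i j) p q) = subst2 (dX (mon i j)) p q * dY p + subst2 (dY (mon i j)) p q * dY q"
    unfolding mx my subst2_mon[OF pq] subst2_ofnat_mult
    by (simp add: dY_mult dY_power algebra_simps)
qed


definition Ch :: "'a::comm_ring_1 ps2 \<Rightarrow> 'a ps2 \<Rightarrow> 'a ps2 \<Rightarrow> bool" where
  "Ch p q g \<longleftrightarrow> dX (subst2 g p q) = subst2 (dX g) p q * dX p + subst2 (dY g) p q * dX q \<and>
     dY (subst2 g p q) = subst2 (dX g) p q * dY p + subst2 (dY g) p q * dY q"

lemma Ch_zero: "Ch p q 0"
  by (simp add: Ch_def subst2_zero dX_zero dY_zero)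

lemma Ch_add: "Ch p q g \<Longrightarrow> Ch p q h \<Longrightarrow> Ch p q (g + h)"
  unfolding Ch_def subst2_add dX_add dY_add by (simp add: distrib_right)

lemma Ch_cst: "Ch p q g \<Longrightarrow> Ch p q (cst c * g)"
  unfolding Ch_def subst2_cst_mult dX_cst_mult dY_cst_mult by (simp add: distrib_left mult.assoc)

lemma Ch_sum: "(\<And>a. a \<in> A \<Longrightarrow> Ch p q (F a)) \<Longrightarrow> Ch p q (sum F A)"
  by (induction A rule: infinite_finite_induct) (auto simp: Ch_zero Ch_add)

lemma chain_trunc:
  assumes pq: "low0 1 p" "low0 1 q"
  shows "dX (subst2 (trunc n g) p q) = subst2 (dX (trunc n g)) p q * dX p + subst2 (dY (trunc n g)) p q * dX q"
    and "dY (subst2 (trunc n g) p q) = subst2 (dX (trunc n g)) p q * dY p + subst2 (dY (trunc n g)) p q * dY q"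
proof -
  have "Ch p q (trunc n g)"
    unfolding trunc_def case_prod_beta
    by (intro Ch_sum Ch_cst) (simp add: Ch_def chain_mon[OF pq])
  thus "dX (subst2 (trunc n g) p q) = subst2 (dX (trunc n g)) p q * dX p + subst2 (dY (trunc n g)) p q * dX q"
    and "dY (subst2 (trunc n g) p q) = subst2 (dX (trunc n g)) p q * dY p + subst2 (dY (trunc n g)) p q * dY q"
    by (simp_all add: Ch_def)
qed

lemma chain:
  assumes pq: "low0 1 p" "low0 1 q"
  shows "dX (subst2 g p q) = subst2 (dX g) p q * dX p + subst2 (dY g) p q * dX q"
    and "dY (subst2 g p q) = subst2 (dX g) p q * dY p + subst2 (dY g) p q * dY q"
proof -
  { fix D :: "'a ps2 \<Rightarrow> 'a ps2" and dp dq
    assume Dlin: "\<And>a b. D (a - b) = D a - D b" and Dlow: "\<And>n a. low0 (Suc n) a \<Longrightarrow> low0 n (D a)"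
      and tr: "\<And>n. D (subst2 (trunc n g) p q) = subst2 (dX (trunc n g)) p q * dp + subst2 (dY (trunc n g)) p q * dq"
    have "D (subst2 g p q) = subst2 (dX g) p q * dp + subst2 (dY g) p q * dq"
    proof (rule low0_eqI)
      fix n
      let ?T = "trunc (Suc n) g"
      have gT: "low0 (Suc (Suc n)) (g - ?T)" by (rule low0_trunc)
      have 1: "low0 (Suc n) (D (subst2 g p q) - D (subst2 ?T p q))"
        unfolding Dlin[symmetric] subst2_diff[symmetric] by (rule Dlow[OF subst2_preserve[OF gT]])
      have 2: "low0 (Suc n) (subst2 (dX g) p q - subst2 (dX ?T) p q)"
        unfolding subst2_diff[symmetric] dX_diff[symmetric] by (rule subst2_preserve[OF low0_dX[OF gT]])
      have 3: "low0 (Suc n) (subst2 (dY g) p q - subst2 (dY ?T) p q)"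
        unfolding subst2_diff[symmetric] dY_diff[symmetric] by (rule subst2_preserve[OF low0_dY[OF gT]])
      have e: "D (subst2 g p q) - (subst2 (dX g) p q * dp + subst2 (dY g) p q * dq) =
         (D (subst2 g p q) - D (subst2 ?T p q)) - (subst2 (dX g) p q - subst2 (dX ?T) p q) * dp
          - (subst2 (dY g) p q - subst2 (dY ?T) p q) * dq"
        unfolding tr by (simp add: algebra_simps)
      show "low0 (Suc n) (D (subst2 g p q) - (subst2 (dX g) p q * dp + subst2 (dY g) p q * dq))"
        unfolding e by (intro low0_diff 1 low0_mult_right 2 3)
    qed }
  note gen = this
  show "dX (subst2 g p q) = subst2 (dX g) p q * dX p + subst2 (dY g) p q * dX q"
    by (rule gen[OF dX_diff low0_dX chain_trunc(1)[OF pq]])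
  show "dY (subst2 g p q) = subst2 (dX g) p q * dY p + subst2 (dY g) p q * dY q"
    by (rule gen[OF dY_diff low0_dY chain_trunc(2)[OF pq]])
qed



definition inv2 :: "'a::field ps2 \<Rightarrow> 'a ps2" where
  "inv2 z = fps_right_inverse z (fps_right_inverse (z $ 0) (inverse (z $ 0 $ 0)))"

lemma inv2: 
  fixes z :: "'a::field ps2"
  assumes "coeff2 z 0 0 \<noteq> 0" shows "z * inv2 z = 1"
proof -
  have "(z $ 0) $ 0 * inverse (z $ 0 $ 0) = 1" using assms by (simp add: coeff2_def)
  hence "z $ 0 * fps_right_inverse (z $ 0) (inverse (z $ 0 $ 0)) = 1" by (rule fps_right_inverse)
  thus ?thesis unfolding inv2_def by (rule fps_right_inverse)
qed

section \<open>Ideal spans\<close>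

lemma ideal_span_mem: "x \<in> S \<Longrightarrow> x \<in> ideal_span S"
  unfolding ideal_span_def by (rule CollectI, rule exI[of _ "{x}"], rule exI[of _ "\<lambda>_. 1"]) simp

lemma ideal_span_zero: "0 \<in> ideal_span S"
  unfolding ideal_span_def by (rule CollectI, rule exI[of _ "{}"]) simp

lemma ideal_span_add:
  assumes "a \<in> ideal_span S" "b \<in> ideal_span S" shows "a + b \<in> ideal_span S"
proof -
  obtain T c where T: "finite T" "T \<subseteq> S" "a = (\<Sum>t\<in>T. c t * t)" using assms(1) by (auto simp: ideal_span_def)
  obtain T' c' where T': "finite T'" "T' \<subseteq> S" "b = (\<Sum>t\<in>T'. c' t * t)" using assms(2) by (auto simp: ideal_span_def)
  let ?d = "\<lambda>t. (if t \<in> T then c t else 0) + (if t \<in> T' then c' t else 0)"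
  have "(\<Sum>t\<in>T \<union> T'. ?d t * t) = (\<Sum>t\<in>T \<union> T'. (if t \<in> T then c t * t else 0) + (if t \<in> T' then c' t * t else 0))"
    by (rule sum.cong) (auto simp: distrib_right)
  also have "\<dots> = (\<Sum>t\<in>T \<union> T'. (if t \<in> T then c t * t else 0)) + (\<Sum>t\<in>T \<union> T'. (if t \<in> T' then c' t * t else 0))"
    by (rule sum.distrib)
  also have "\<dots> = (\<Sum>t\<in>(T \<union> T') \<inter> T. c t * t) + (\<Sum>t\<in>(T \<union> T') \<inter> T'. c' t * t)"
    by (subst (1 2) sum.inter_restrict) (use T T' in auto)
  also have "\<dots> = a + b" using T T' by (simp add: Int_absorb1)
  finally show ?thesis unfolding ideal_span_def using T T'
    by (intro CollectI exI[of _ "T \<union> T'"] exI[of _ ?d]) auto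
qed

lemma ideal_span_mult: "a \<in> ideal_span S \<Longrightarrow> r * a \<in> ideal_span S"
proof -
  assume "a \<in> ideal_span S"
  then obtain T c where T: "finite T" "T \<subseteq> S" "a = (\<Sum>t\<in>T. c t * t)" by (auto simp: ideal_span_def)
  have "r * a = (\<Sum>t\<in>T. (r * c t) * t)" using T(3) by (simp add: sum_distrib_left mult.assoc)
  thus ?thesis using T unfolding ideal_span_def
    by (intro CollectI exI[of _ T] exI[of _ "\<lambda>t. r * c t"]) simp
qed

lemma ideal_span3_cases:
  fixes a b d :: "'b::comm_ring_1"
  assumes "finite T" "T \<subseteq> {a, b, d}"
  shows "\<exists>u v w. (\<Sum>t\<in>T. c t * t) = u * a + v * b + w * d"
  using assms
proof (induction T rule: finite_induct)
  case empty show ?case by (intro exI[of _ 0]) simp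
next
  case (insert x T)
  then obtain u v w where e: "(\<Sum>t\<in>T. c t * t) = u * a + v * b + w * d" by auto
  have "x = a \<or> x = b \<or> x = d" using insert by auto
  thus ?case
  proof (elim disjE)
    assume "x = a" thus ?thesis using insert e
      by (intro exI[of _ "u + c x"] exI[of _ v] exI[of _ w]) (simp add: algebra_simps)
  next
    assume "x = b" thus ?thesis using insert e
      by (intro exI[of _ u] exI[of _ "v + c x"] exI[of _ w]) (simp add: algebra_simps)
  next
    assume "x = d" thus ?thesis using insert e
      by (intro exI[of _ u] exI[of _ v] exI[of _ "w + c x"]) (simp add: algebra_simps)
  qed
qed

lemma ideal_span3_D: "s \<in> ideal_span {a, b, d} \<Longrightarrow> \<exists>u v w. s = u * a + v * b + w * d"
  unfolding ideal_span_def using ideal_span3_cases by blast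

section \<open>maxid and powers\<close>

lemma ideal_span_low0:
  assumes "s \<in> ideal_span S" "\<And>t. t \<in> S \<Longrightarrow> low0 n t" shows "low0 n s"
proof -
  obtain T c where T: "finite T" "T \<subseteq> S" "s = (\<Sum>t\<in>T. c t * t)" using assms(1) by (auto simp: ideal_span_def)
  have "low0 n (c t * t)" if "t \<in> T" for t using that T(2) assms(2) by (intro low0_mult_left) blast
  thus ?thesis unfolding T(3) by (rule low0_sum)
qed

lemma maxid_low0: "h \<in> maxid \<Longrightarrow> low0 1 h"
  unfolding maxid_def
proof (erule ideal_span_low0)
  fix t :: "'a ps2" assume "t \<in> {varX, varY}" thus "low0 1 t" using low0_X low0_Y by blast
qed

lemma low0_maxid: 
  assumes "low0 1 h" shows "h \<in> maxid"
proof -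
  let ?a = "fps_const (fps_shift 1 (h $ 0))" and ?b = "fps_shift 1 h"
  have "h = varX * ?a + varY * ?b"
  proof (rule coeff2_ext)
    fix i j
    have h00: "coeff2 h 0 0 = 0" using assms by (simp add: low0_def)
    show "coeff2 h i j = coeff2 (varX * ?a + varY * ?b) i j"
      using h00 unfolding coeff2_add coeff2_X_mult coeff2_Y_mult
      by (cases i; cases j) (simp_all add: coeff2_def)
  qed
  moreover have "varX * ?a \<in> maxid" "varY * ?b \<in> maxid"
    unfolding maxid_def by (subst mult.commute, rule ideal_span_mult, rule ideal_span_mem, simp)+
  ultimately show ?thesis using ideal_span_add maxid_def by metis
qed

lemma maxid_iff: "h \<in> maxid \<longleftrightarrow> low0 1 h"
  using maxid_low0 low0_maxid by blast

lemma low0_prod_list: "set xs \<subseteq> maxid \<Longrightarrow> low0 (length xs) (prod_list xs)"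
proof (induction xs)
  case (Cons x xs)
  thus ?case using low0_mult[OF maxid_low0[of x] Cons.IH] by simp
qed simp

lemma ideal_pow_low0: "g \<in> ideal_pow maxid n \<Longrightarrow> low0 n g"
  unfolding ideal_pow_def by (erule ideal_span_low0) (use low0_prod_list in fastforce)

lemma power_ideal_pow: "h \<in> maxid \<Longrightarrow> h ^ n \<in> ideal_pow maxid n"
  unfolding ideal_pow_def
  by (rule ideal_span_mem, rule CollectI, rule exI[of _ "replicate n h"]) (cases "n = 0", auto)



definition unitp :: "'a::comm_ring_1 \<Rightarrow> bool" where "unitp z \<longleftrightarrow> (\<exists>e. z * e = 1)"

lemma unitp_coeff: "coeff2 (z::'a::field ps2) 0 0 \<noteq> 0 \<Longrightarrow> unitp z"
  using inv2 unitp_def by blast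

lemma unitp_mult: "unitp a \<Longrightarrow> unitp b \<Longrightarrow> unitp (a * b)"
  unfolding unitp_def by (metis mult.assoc mult.left_commute mult_1_right)

lemma unitp_subst2: "low0 1 p \<Longrightarrow> low0 1 q \<Longrightarrow> unitp z \<Longrightarrow> unitp (subst2 z p q)"
  unfolding unitp_def by (metis subst2_mult subst2_one)

lemma GL2_det:
  fixes u11 u12 u21 u22 :: "'a::comm_ring_1"
  shows "is_GL2 u11 u12 u21 u22 \<longleftrightarrow> unitp (u11 * u22 - u12 * u21)"
proof
  assume "is_GL2 u11 u12 u21 u22"
  then obtain v11 v12 v21 v22 where v:
      "u11*v11 + u12*v21 = 1" "u11*v12 + u12*v22 = 0"
      "u21*v11 + u22*v21 = 0" "u21*v12 + u22*v22 = 1" unfolding is_GL2_def by blast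
  have "(u11 * u22 - u12 * u21) * (v11 * v22 - v12 * v21) =
        (u11*v11 + u12*v21) * (u21*v12 + u22*v22) - (u11*v12 + u12*v22) * (u21*v11 + u22*v21)"
    by (simp add: algebra_simps)
  also have "\<dots> = 1" by (simp add: v)
  finally show "unitp (u11 * u22 - u12 * u21)" unfolding unitp_def by blast
next
  assume "unitp (u11 * u22 - u12 * u21)"
  then obtain e where e: "(u11 * u22 - u12 * u21) * e = 1" unfolding unitp_def by blast
  have e': "u11 * u22 * e - u12 * u21 * e = 1" using e by (simp add: algebra_simps)
  show "is_GL2 u11 u12 u21 u22" unfolding is_GL2_def
    by (rule exI[of _ "u22 * e"], rule exI[of _ "- u12 * e"], rule exI[of _ "- u21 * e"], rule exI[of _ "u11 * e"])
       (use e' in \<open>simp add: algebra_simps\<close>)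
qed

lemma contact_act_simp: "contact_act (u11, u12, u21, u22) (p, q) f =
   (u11 * subst2 (fst f) p q + u12 * subst2 (snd f) p q, u21 * subst2 (fst f) p q + u22 * subst2 (snd f) p q)"
  by (simp add: contact_act_def Let_def)

lemma is_aut_low: "is_aut p q \<Longrightarrow> low0 1 p \<and> low0 1 q"
  by (simp add: is_aut_def maxid_iff)

lemma is_aut_comp:
  assumes "is_aut p q" "is_aut P Q"
  shows "is_aut (subst2 p P Q) (subst2 q P Q)"
proof -
  have l: "low0 1 p" "low0 1 q" "low0 1 P" "low0 1 Q" using assms is_aut_low by blast+
  have "(\<lambda>g. subst2 g (subst2 p P Q) (subst2 q P Q)) = (\<lambda>g. subst2 g P Q) \<circ> (\<lambda>g. subst2 g p q)"
    by (rule ext) (simp add: subst2_comp[OF l])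
  moreover have "bij (\<lambda>g. subst2 g P Q)" "bij (\<lambda>g. subst2 g p q)" using assms by (simp_all add: is_aut_def)
  ultimately have "bij (\<lambda>g. subst2 g (subst2 p P Q) (subst2 q P Q))" by (simp add: bij_comp)
  thus ?thesis using l by (simp add: is_aut_def maxid_iff subst2_preserve)
qed

lemma is_aut_id: "is_aut varX varY"
  using low0_X low0_Y by (simp add: is_aut_def maxid_iff subst2_id bij_id[unfolded id_def])

lemma is_aut_inv:
  assumes l: "low0 1 p" "low0 1 q" "low0 1 P" "low0 1 Q"
    and e: "subst2 p P Q = varX" "subst2 q P Q = varY" "subst2 P p q = varX" "subst2 Q p q = varY"
  shows "is_aut p q"
proof -
  have "bij (\<lambda>g. subst2 g p q)"
  proof (rule bij_betw_byWitness[where f'="\<lambda>g. subst2 g P Q"])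
    show "\<forall>a\<in>UNIV. subst2 (subst2 a p q) P Q = a" by (simp add: subst2_comp[OF l] e subst2_id)
    show "\<forall>a'\<in>UNIV. subst2 (subst2 a' P Q) p q = a'" by (simp add: subst2_comp[OF l(3,4,1,2)] e subst2_id)
  qed auto
  thus ?thesis using l by (simp add: is_aut_def maxid_iff)
qed

lemma contact_comp:
  fixes f :: "'a::comm_ring_1 ps2 \<times> 'a ps2"
  assumes U: "is_GL2 u11 u12 u21 u22" and V: "is_GL2 v11 v12 v21 v22"
    and a1: "is_aut p q" and a2: "is_aut P Q"
  shows "\<exists>w11 w12 w21 w22 p' q'. is_GL2 w11 w12 w21 w22 \<and> is_aut p' q' \<and>
     contact_act (v11, v12, v21, v22) (P, Q) (contact_act (u11, u12, u21, u22) (p, q) f)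
       = contact_act (w11, w12, w21, w22) (p', q') f"
proof -
  have l: "low0 1 p" "low0 1 q" "low0 1 P" "low0 1 Q" using a1 a2 is_aut_low by blast+
  let ?s = "\<lambda>g. subst2 g P Q"
  let ?w11 = "v11 * ?s u11 + v12 * ?s u21" and ?w12 = "v11 * ?s u12 + v12 * ?s u22"
  let ?w21 = "v21 * ?s u11 + v22 * ?s u21" and ?w22 = "v21 * ?s u12 + v22 * ?s u22"
  have detw: "?w11 * ?w22 - ?w12 * ?w21 = (v11 * v22 - v12 * v21) * ?s (u11 * u22 - u12 * u21)"
    by (simp add: subst2_mult[OF l(3,4)] subst2_diff algebra_simps)
  have "is_GL2 ?w11 ?w12 ?w21 ?w22"
    unfolding GL2_det detw using U V l by (auto simp: GL2_det intro!: unitp_mult unitp_subst2)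
  moreover have "contact_act (v11, v12, v21, v22) (P, Q) (contact_act (u11, u12, u21, u22) (p, q) f)
       = contact_act (?w11, ?w12, ?w21, ?w22) (subst2 p P Q, subst2 q P Q) f"
    by (simp add: contact_act_simp subst2_add subst2_mult[OF l(3,4)] subst2_comp[OF l] algebra_simps)
  ultimately show ?thesis using is_aut_comp[OF a1 a2] by blast
qed

lemma contact_equiv_trans:
  "contact_equiv f g \<Longrightarrow> contact_equiv g h \<Longrightarrow> contact_equiv f h"
  unfolding contact_equiv_def using contact_comp by metis

lemma contact_equiv_matrix:
  "is_GL2 u11 u12 u21 u22 \<Longrightarrow> contact_equiv f (contact_act (u11, u12, u21, u22) (varX, varY) f)"
  unfolding contact_equiv_def using is_aut_id by blast



definition mk2 :: "(nat \<Rightarrow> nat \<Rightarrow> 'a::comm_ring_1) \<Rightarrow> 'a ps2" where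
  "mk2 F = Abs_fps (\<lambda>j. Abs_fps (\<lambda>i. F i j))"

lemma coeff2_mk2[simp]: "coeff2 (mk2 F) i j = F i j"
  by (simp add: mk2_def coeff2_def)

lemma coeff2_X3_mult: "coeff2 ((varX::'a::comm_ring_1 ps2) ^ 3 * g) a b = (if a < 3 then 0 else coeff2 g (a - 3) b)"
  by (rule coeff2_Xpow_mult)

lemma coeff2_XY2_mult: "coeff2 ((varX::'a::comm_ring_1 ps2) * varY ^ 2 * g) a b =
   (if a = 0 \<or> b < 2 then 0 else coeff2 g (a - 1) (b - 2))"
  by (simp add: mult.assoc coeff2_X_mult coeff2_Ypow_mult)

lemma dec3:
  fixes e :: "'a::comm_ring_1 ps2"
  assumes n: "4 \<le> n" and e: "low0 n e"
  defines "\<alpha> \<equiv> mk2 (\<lambda>a b. coeff2 e (a + 3) b)"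
    and "\<beta> \<equiv> mk2 (\<lambda>a b. if a \<le> 1 then coeff2 e (a + 1) (b + 2) else 0)"
    and "\<gamma> \<equiv> mk2 (\<lambda>a b. if a = 0 then coeff2 e 0 (b + n) else 0)"
  shows "e = varX ^ 3 * \<alpha> + varX * varY ^ 2 * \<beta> + varY ^ n * \<gamma>"
    and "low0 (n - 3) \<alpha>" and "low0 (n - 3) \<beta>" and "coeff2 \<gamma> 0 0 = coeff2 e 0 n"
proof -
  show "e = varX ^ 3 * \<alpha> + varX * varY ^ 2 * \<beta> + varY ^ n * \<gamma>"
  proof (rule coeff2_ext)
    fix i j
    have z: "coeff2 e i j = 0" if "i + j < n" using e that by (simp add: low0_def)
    have jj: "Suc (Suc (j - 2)) = j" if "2 \<le> j" using that by simp
    have jn: "2 \<le> j" if "n \<le> j" using that n by simp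
    show "coeff2 e i j = coeff2 (varX ^ 3 * \<alpha> + varX * varY ^ 2 * \<beta> + varY ^ n * \<gamma>) i j"
      unfolding coeff2_add coeff2_X3_mult coeff2_XY2_mult coeff2_Ypow_mult \<alpha>_def \<beta>_def \<gamma>_def coeff2_mk2
      using z n by (cases "i \<ge> 3"; cases "i = 0"; cases "j \<ge> 2"; cases "j \<ge> n") (auto simp: jj jn)
  qed
  show "low0 (n - 3) \<alpha>" "low0 (n - 3) \<beta>" using e unfolding \<alpha>_def \<beta>_def low0_def by auto
  show "coeff2 \<gamma> 0 0 = coeff2 e 0 n" by (simp add: \<gamma>_def)
qed

lemma low0_cst_diff: "low0 1 (z - cst (coeff2 z 0 0))"
  by (simp add: low0_def coeff2_cst)

lemma coeff2_X_mult0: "coeff2 ((varX::'a::comm_ring_1 ps2) * g) 0 b = 0"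
  by (simp add: coeff2_X_mult)


lemma shear_aut:
  assumes m: "1 \<le> m"
  shows "is_aut (varX + cst s * varY ^ m) (varY :: 'a::comm_ring_1 ps2)"
proof -
  let ?p = "varX + cst s * varY ^ m" and ?P = "varX - cst s * varY ^ m"
  have ym: "low0 1 (varY ^ m :: 'a ps2)" using low0_Ypow[of m] m by (rule low0_mono)
  have lp: "low0 1 ?p" "low0 1 ?P" by (intro low0_add low0_diff low0_cst_mult ym low0_X)+
  show ?thesis
    by (rule is_aut_inv[OF lp(1) low0_Y lp(2) low0_Y])
       (simp_all add: subst2_add subst2_diff subst2_cst_mult subst2_power[OF lp(1) low0_Y] subst2_power[OF lp(2) low0_Y]
         subst2_X[OF lp(1) low0_Y] subst2_Y[OF lp(1) low0_Y] subst2_X[OF lp(2) low0_Y] subst2_Y[OF lp(2) low0_Y])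
qed

lemma deg_step:
  fixes g1 g2 P :: "'a::field ps2"
  assumes d: "4 \<le> d" and P: "low0 4 P"
    and h1: "low0 d (g1 - varX ^ 3 - P)" and h2: "low0 d (g2 - varX * varY ^ 2)"
  shows "\<exists>w11 w12 w21 w22 p q. is_GL2 w11 w12 w21 w22 \<and> is_aut p q \<and>
    low0 (Suc d) (fst (contact_act (w11, w12, w21, w22) (p, q) (g1, g2)) - varX ^ 3 -
        (P + cst (coeff2 (g1 - varX ^ 3 - P) 0 d) * varY ^ d)) \<and>
    low0 (Suc d) (snd (contact_act (w11, w12, w21, w22) (p, q) (g1, g2)) - varX * varY ^ 2)"
proof -
  define e1 where "e1 = g1 - varX ^ 3 - P"
  define e2 where "e2 = g2 - varX * varY ^ 2"
  define s where "s = - coeff2 e2 0 d"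
  define \<sigma> where "\<sigma> = cst s * varY ^ (d - 2)"
  define p where "p = varX + \<sigma>"
  have g1: "g1 = varX ^ 3 + P + e1" and g2: "g2 = varX * varY ^ 2 + e2" by (simp_all add: e1_def e2_def)
  have ls: "low0 (d - 2) \<sigma>" unfolding \<sigma>_def by (intro low0_cst_mult low0_Ypow)
  have ls1: "low0 ((d - 3) + 1) (p - varX)" using ls d by (simp add: p_def) (rule low0_mono, auto)
  have ly: "low0 ((d - 3) + 1) (varY - varY)" by simp
  have lp: "low0 1 p" using ls d unfolding p_def by (intro low0_add low0_X) (rule low0_mono, auto)
  have autp: "is_aut p varY" unfolding p_def \<sigma>_def by (rule shear_aut) (use d in simp)
  let ?s = "\<lambda>z. subst2 z p varY"
  define E1 where "E1 = ?s g1 - varX ^ 3 - P"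
  define E2 where "E2 = ?s g2 - varX * varY ^ 2"
  have sX: "?s varX = p" and sY: "?s varY = varY" by (rule subst2_X[OF lp low0_Y], rule subst2_Y[OF lp low0_Y])
  have cP: "low0 (Suc d) (?s P - P)" using subst2_close[OF ls1 ly P] d by (auto elim: low0_mono)
  have ce1: "low0 (Suc d) (?s e1 - e1)"
    using subst2_close[OF ls1 ly h1[folded e1_def]] d by (auto elim: low0_mono)
  have cube: "p ^ 3 - varX ^ 3 = 3 * varX\<^sup>2 * \<sigma> + (3 * varX * \<sigma>\<^sup>2 + \<sigma> ^ 3)"
    by (simp add: p_def power3_eq_cube power2_eq_square algebra_simps)
  have l1: "low0 d (3 * varX\<^sup>2 * \<sigma>)"
  proof -
    have "low0 (2 + (d - 2)) (varX\<^sup>2 * \<sigma>)" by (rule low0_mult[OF low0_Xpow ls])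
    hence "low0 d (varX\<^sup>2 * \<sigma>)" by (rule low0_mono) (use d in simp)
    thus ?thesis by (simp add: mult.assoc low0_mult_left)
  qed
  have l2: "low0 (Suc d) (3 * varX * \<sigma>\<^sup>2 + \<sigma> ^ 3)"
  proof (rule low0_add)
    have "low0 (1 + (d - 2) * 2) (varX * \<sigma>\<^sup>2)" by (rule low0_mult[OF low0_X low0_power[OF ls]])
    hence "low0 (Suc d) (varX * \<sigma>\<^sup>2)" by (rule low0_mono) (use d in simp)
    thus "low0 (Suc d) (3 * varX * \<sigma>\<^sup>2)" by (simp add: mult.assoc low0_mult_left)
    have "low0 ((d - 2) * 3) (\<sigma> ^ 3)" by (rule low0_power[OF ls])
    thus "low0 (Suc d) (\<sigma> ^ 3)" by (rule low0_mono) (use d in simp)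
  qed
  have E1eq: "E1 = e1 + 3 * varX\<^sup>2 * \<sigma> + ((3 * varX * \<sigma>\<^sup>2 + \<sigma> ^ 3) + (?s P - P) + (?s e1 - e1))"
  proof -
    have "?s g1 = p ^ 3 + ?s P + ?s e1"
      unfolding g1 by (simp add: subst2_add subst2_power[OF lp low0_Y] sX)
    thus ?thesis unfolding E1_def using cube by (simp add: algebra_simps)
  qed
  have R1: "low0 (Suc d) ((3 * varX * \<sigma>\<^sup>2 + \<sigma> ^ 3) + (?s P - P) + (?s e1 - e1))"
    by (rule low0_add[OF low0_add[OF l2 cP] ce1])
  have lE1: "low0 d E1" unfolding E1eq
    by (rule low0_add[OF low0_add[OF h1[folded e1_def] l1] low0_mono[OF R1]]) simp
  have cE1: "coeff2 E1 0 d = coeff2 e1 0 d"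
  proof -
    define A where "A = 3 * varX\<^sup>2 * \<sigma>"
    define R where "R = (3 * varX * \<sigma>\<^sup>2 + \<sigma> ^ 3) + (?s P - P) + (?s e1 - e1)"
    have "coeff2 A 0 d = 0"
      by (simp add: A_def mult.commute[of 3] mult.assoc power2_eq_square coeff2_X_mult0)
    moreover have "coeff2 R 0 d = 0"
      using R1 by (simp add: low0_def R_def)
    moreover have "E1 = e1 + A + R" unfolding E1eq A_def R_def ..
    ultimately show ?thesis by simp
  qed
  have ce2: "low0 (Suc d) (?s e2 - e2)"
    using subst2_close[OF ls1 ly h2[folded e2_def]] d by (auto elim: low0_mono)
  have E2eq: "E2 = cst s * varY ^ d + e2 + (?s e2 - e2)"
  proof -
    have "?s g2 = p * varY ^ 2 + ?s e2"
      unfolding g2 by (simp add: subst2_add subst2_mult[OF lp low0_Y] subst2_power[OF lp low0_Y] sX sY)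
    moreover have "\<sigma> * varY ^ 2 = cst s * varY ^ d"
    proof -
      have "varY ^ (d - 2) * varY ^ 2 = (varY ^ (d - 2 + 2) :: 'a ps2)" by (simp only: power_add)
      also have "d - 2 + 2 = d" using d by simp
      finally have "varY ^ (d - 2) * varY ^ 2 = (varY ^ d :: 'a ps2)" .
      thus ?thesis by (simp add: \<sigma>_def mult.assoc)
    qed
    ultimately show ?thesis unfolding E2_def p_def by (simp add: algebra_simps)
  qed
  have lE2: "low0 d E2" unfolding E2eq using h2[folded e2_def] ce2
    by (intro low0_add low0_cst_mult low0_Ypow) (auto elim: low0_mono)
  have cE2: "coeff2 E2 0 d = 0"
  proof -
    have "coeff2 (?s e2 - e2) 0 d = 0" using ce2 by (simp add: low0_def)
    moreover have "coeff2 (cst s * varY ^ d) 0 d = s"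
      using coeff2_Ypow_mult[of d "1::'a ps2" 0 d] by (simp add: coeff2_1)
    ultimately show ?thesis unfolding E2eq by (simp add: s_def)
  qed
  obtain \<alpha> \<beta> \<gamma> where D1: "E1 = varX ^ 3 * \<alpha> + varX * varY ^ 2 * \<beta> + varY ^ d * \<gamma>"
    "low0 (d - 3) \<alpha>" "low0 (d - 3) \<beta>" "coeff2 \<gamma> 0 0 = coeff2 E1 0 d"
    using dec3[OF d lE1] by blast
  obtain \<alpha>' \<beta>' \<gamma>' where D2: "E2 = varX ^ 3 * \<alpha>' + varX * varY ^ 2 * \<beta>' + varY ^ d * \<gamma>'"
    "low0 (d - 3) \<alpha>'" "low0 (d - 3) \<beta>'" "coeff2 \<gamma>' 0 0 = coeff2 E2 0 d"
    using dec3[OF d lE2] by blast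
  define c where "c = coeff2 (g1 - varX ^ 3 - P) 0 d"
  have c: "coeff2 \<gamma> 0 0 = c" using D1(4) cE1 by (simp add: c_def e1_def)
  have a1: "low0 1 \<alpha>" "low0 1 \<beta>" "low0 1 \<alpha>'" "low0 1 \<beta>'"
    using D1(2,3) D2(2,3) d by (auto elim: low0_mono)
  have gam: "low0 (Suc d) (varY ^ d * (\<gamma> - cst c))" "low0 (Suc d) (varY ^ d * \<gamma>')"
    using low0_Ypow_mult[OF low0_cst_diff[of \<gamma>], of d] low0_Ypow_mult[OF low0_cst_diff[of \<gamma>'], of d]
      c D2(4) cE2 by (simp_all add: add.commute)
  have PE: "low0 4 (P + E1)" using P lE1 d by (intro low0_add) (auto elim: low0_mono)
  have lE2': "low0 4 E2" using lE2 d by (rule low0_mono)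
  have prodl: "low0 (Suc d) (x * y)" if "low0 (d - 3) x" "low0 4 y" for x y
    using low0_mult[OF that] d by (auto elim: low0_mono)
  define w11 where "w11 = 1 - \<alpha>"
  define w12 where "w12 = - \<beta>"
  define w21 where "w21 = - \<alpha>'"
  define w22 where "w22 = 1 - \<beta>'"
  have GL: "is_GL2 w11 w12 w21 w22"
  proof -
    have "coeff2 (w11 * w22 - w12 * w21) 0 0 = 1"
      using a1 by (simp add: w11_def w12_def w21_def w22_def coeff2_mult coeff2_1 low0_def)
    thus ?thesis unfolding GL2_det by (intro unitp_coeff) simp
  qed
  have sg1: "?s g1 = varX ^ 3 + P + E1" and sg2: "?s g2 = varX * varY ^ 2 + E2"
    by (simp_all add: E1_def E2_def)
  have fst: "fst (contact_act (w11, w12, w21, w22) (p, varY) (g1, g2)) - varX ^ 3 - (P + cst c * varY ^ d)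
     = varY ^ d * (\<gamma> - cst c) - \<alpha> * (P + E1) - \<beta> * E2"
  proof -
    have "fst (contact_act (w11, w12, w21, w22) (p, varY) (g1, g2)) - varX ^ 3 - (P + cst c * varY ^ d)
      = (E1 - varX ^ 3 * \<alpha> - varX * varY ^ 2 * \<beta> - cst c * varY ^ d) - \<alpha> * (P + E1) - \<beta> * E2"
      unfolding contact_act_simp fst_conv snd_conv sg1 sg2 w11_def w12_def by (simp add: algebra_simps)
    also have "E1 - varX ^ 3 * \<alpha> - varX * varY ^ 2 * \<beta> - cst c * varY ^ d = varY ^ d * (\<gamma> - cst c)"
      unfolding D1(1) by (simp add: algebra_simps)
    finally show ?thesis .
  qed
  have snd: "snd (contact_act (w11, w12, w21, w22) (p, varY) (g1, g2)) - varX * varY ^ 2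
     = varY ^ d * \<gamma>' - \<alpha>' * (P + E1) - \<beta>' * E2"
  proof -
    have "snd (contact_act (w11, w12, w21, w22) (p, varY) (g1, g2)) - varX * varY ^ 2
      = (E2 - varX ^ 3 * \<alpha>' - varX * varY ^ 2 * \<beta>') - \<alpha>' * (P + E1) - \<beta>' * E2"
      unfolding contact_act_simp fst_conv snd_conv sg1 sg2 w21_def w22_def by (simp add: algebra_simps)
    also have "E2 - varX ^ 3 * \<alpha>' - varX * varY ^ 2 * \<beta>' = varY ^ d * \<gamma>'"
      unfolding D2(1) by (simp add: algebra_simps)
    finally show ?thesis .
  qed
  have "low0 (Suc d) (fst (contact_act (w11, w12, w21, w22) (p, varY) (g1, g2)) - varX ^ 3 - (P + cst c * varY ^ d))"
    unfolding fst using gam(1) prodl[OF D1(2) PE] prodl[OF D1(3) lE2'] by (intro low0_diff)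
  moreover have "low0 (Suc d) (snd (contact_act (w11, w12, w21, w22) (p, varY) (g1, g2)) - varX * varY ^ 2)"
    unfolding snd using gam(2) prodl[OF D2(2) PE] prodl[OF D2(3) lE2'] by (intro low0_diff)
  ultimately show ?thesis using GL autp unfolding c_def by blast
qed



definition Psum :: "(nat \<Rightarrow> 'a) \<Rightarrow> nat \<Rightarrow> 'a::comm_ring_1 ps2" where
  "Psum c N = (\<Sum>j\<in>{4..<N}. cst (c j) * varY ^ j)"

lemma coeff2_cst_Ypow: "coeff2 (cst a * varY ^ j :: 'a::comm_ring_1 ps2) x y = (if x = 0 \<and> y = j then a else 0)"
  using coeff2_Ypow_mult[of j "1::'a ps2" x y] by (auto simp: coeff2_1)

lemma coeff2_Psum: "coeff2 (Psum c N) a b = (if a = 0 \<and> 4 \<le> b \<and> b < N then c b else 0)"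
proof -
  have "coeff2 (Psum c N) a b = (\<Sum>j\<in>{4..<N}. if j = b then (if a = 0 then c b else 0) else 0)"
    unfolding Psum_def coeff2_sum coeff2_cst_Ypow by (intro sum.cong) auto
  also have "\<dots> = (if a = 0 \<and> 4 \<le> b \<and> b < N then c b else 0)" by (subst sum.delta) auto
  finally show ?thesis .
qed

lemma low0_Psum: "low0 4 (Psum c N)"
  by (simp add: low0_def coeff2_Psum)

lemma Psum_Suc: "N \<ge> 4 \<Longrightarrow> Psum (c(N := v)) (Suc N) = Psum c N + cst v * varY ^ N"
proof -
  assume N: "N \<ge> 4"
  have "{4..<Suc N} = insert N {4..<N}" using N by auto
  hence "Psum (c(N := v)) (Suc N) = cst v * varY ^ N + (\<Sum>j\<in>{4..<N}. cst ((c(N := v)) j) * varY ^ j)"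
    unfolding Psum_def by simp
  also have "(\<Sum>j\<in>{4..<N}. cst ((c(N := v)) j) * varY ^ j) = Psum c N"
    unfolding Psum_def by (intro sum.cong) auto
  finally show ?thesis by (metis add.commute)
qed

lemma iter:
  fixes f h :: "'a::field ps2 \<times> 'a ps2"
  assumes fh: "contact_equiv f h" and h1: "low0 4 (fst h - varX ^ 3)" and h2: "low0 4 (snd h - varX * varY ^ 2)"
    and N: "4 \<le> N"
  shows "\<exists>g c. contact_equiv f g \<and> low0 N (fst g - varX ^ 3 - Psum c N) \<and> low0 N (snd g - varX * varY ^ 2)"
  using N
proof (induction N rule: dec_induct)
  case base
  have "Psum (\<lambda>_. 0::'a) 4 = 0" by (simp add: Psum_def)
  thus ?case using fh h1 h2 by (intro exI[of _ h] exI[of _ "\<lambda>_. 0::'a"]) simp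
next
  case (step N)
  then obtain g c where g: "contact_equiv f g" "low0 N (fst g - varX ^ 3 - Psum c N)" "low0 N (snd g - varX * varY ^ 2)"
    by blast
  define v where "v = coeff2 (fst g - varX ^ 3 - Psum c N) 0 N"
  obtain w11 w12 w21 w22 p q where W: "is_GL2 w11 w12 w21 w22" "is_aut p q"
    "low0 (Suc N) (fst (contact_act (w11, w12, w21, w22) (p, q) (fst g, snd g)) - varX ^ 3 -
        (Psum c N + cst v * varY ^ N))"
    "low0 (Suc N) (snd (contact_act (w11, w12, w21, w22) (p, q) (fst g, snd g)) - varX * varY ^ 2)"
    using deg_step[OF step.hyps(1) low0_Psum g(2) g(3)] unfolding v_def by blast
  let ?g' = "contact_act (w11, w12, w21, w22) (p, q) (fst g, snd g)"
  have "contact_equiv g ?g'" unfolding contact_equiv_def using W(1,2) by (metis prod.collapse)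
  hence "contact_equiv f ?g'" using g(1) contact_equiv_trans by blast
  moreover have "Psum (c(N := v)) (Suc N) = Psum c N + cst v * varY ^ N"
    using step.hyps(1) by (rule Psum_Suc)
  ultimately show ?case using W(3,4) by metis
qed



lemma ideal_span_diff: "a \<in> ideal_span S \<Longrightarrow> b \<in> ideal_span S \<Longrightarrow> a - b \<in> ideal_span S"
  using ideal_span_add[of a S "(-1) * b"] ideal_span_mult[of b S "-1"] by simp

lemma coeff2_subst2_00: "coeff2 (subst2 z p q) 0 0 = coeff2 z 0 0"
  by (simp add: coeff2_subst2 coeff2_1)

lemma coeff2_subst2_10:
  assumes "low0 1 p" "low0 1 q" "coeff2 z 0 0 = 0"
  shows "coeff2 (subst2 z p q) 1 0 = coeff2 z 1 0 * coeff2 p 1 0 + coeff2 z 0 1 * coeff2 q 1 0"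
    and "coeff2 (subst2 z p q) 0 1 = coeff2 z 1 0 * coeff2 p 0 1 + coeff2 z 0 1 * coeff2 q 0 1"
  using assms by (simp_all add: coeff2_subst2 atMost_Suc)

lemma coeff2_mult00: "coeff2 (a * b) 0 0 = coeff2 a 0 0 * coeff2 b 0 0"
  by (simp add: coeff2_mult)

lemma jac_det_unit:
  fixes p q :: "'a::field ps2"
  assumes a: "is_aut p q"
  shows "unitp (dX p * dY q - dY p * dX q)"
proof -
  have l: "low0 1 p" "low0 1 q" using a is_aut_low by blast+
  have b: "bij (\<lambda>g. subst2 g p q)" using a by (simp add: is_aut_def)
  obtain h1 where h1: "subst2 h1 p q = varX" using surjD[OF bij_is_surj[OF b], of varX] by metis
  obtain h2 where h2: "subst2 h2 p q = varY" using surjD[OF bij_is_surj[OF b], of varY] by metis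
  have z1: "coeff2 h1 0 0 = 0" using coeff2_subst2_00[of h1 p q] h1 by (simp add: coeff2_X)
  have z2: "coeff2 h2 0 0 = 0" using coeff2_subst2_00[of h2 p q] h2 by (simp add: coeff2_Y)
  define p10 where "p10 = coeff2 p 1 0"
  define p01 where "p01 = coeff2 p 0 1"
  define q10 where "q10 = coeff2 q 1 0"
  define q01 where "q01 = coeff2 q 0 1"
  have e1: "coeff2 h1 1 0 * p10 + coeff2 h1 0 1 * q10 = 1" "coeff2 h1 1 0 * p01 + coeff2 h1 0 1 * q01 = 0"
    using coeff2_subst2_10[OF l z1] h1 by (simp_all add: coeff2_X p10_def p01_def q10_def q01_def)
  have e2: "coeff2 h2 1 0 * p10 + coeff2 h2 0 1 * q10 = 0" "coeff2 h2 1 0 * p01 + coeff2 h2 0 1 * q01 = 1"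
    using coeff2_subst2_10[OF l z2] h2 by (simp_all add: coeff2_Y p10_def p01_def q10_def q01_def)
  have "(coeff2 h1 1 0 * coeff2 h2 0 1 - coeff2 h1 0 1 * coeff2 h2 1 0) * (p10 * q01 - p01 * q10) =
     (coeff2 h1 1 0 * p10 + coeff2 h1 0 1 * q10) * (coeff2 h2 1 0 * p01 + coeff2 h2 0 1 * q01)
     - (coeff2 h1 1 0 * p01 + coeff2 h1 0 1 * q01) * (coeff2 h2 1 0 * p10 + coeff2 h2 0 1 * q10)"
    by (simp add: algebra_simps)
  also have "\<dots> = 1" using e1 e2 by simp
  finally have "p10 * q01 - p01 * q10 \<noteq> 0" by auto
  moreover have "coeff2 (dX p * dY q - dY p * dX q) 0 0 = p10 * q01 - p01 * q10"
    by (simp add: coeff2_mult00 coeff2_dX coeff2_dY p10_def p01_def q10_def q01_def)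
  ultimately show ?thesis by (intro unitp_coeff) simp
qed

lemma jac_subst:
  assumes l: "low0 1 p" "low0 1 q"
  shows "jac_minor (subst2 f1 p q, subst2 f2 p q) = subst2 (jac_minor (f1, f2)) p q * (dX p * dY q - dY p * dX q)"
  unfolding jac_minor_def fst_conv snd_conv chain[OF l]
  by (simp add: subst2_diff subst2_mult[OF l] algebra_simps)

lemma jac_matrix_span:
  fixes u11 u12 u21 u22 \<phi>1 \<phi>2 :: "'a::field ps2"
  assumes U: "is_GL2 u11 u12 u21 u22"
  defines "G1 \<equiv> u11 * \<phi>1 + u12 * \<phi>2" and "G2 \<equiv> u21 * \<phi>1 + u22 * \<phi>2"
  shows "\<phi>1 \<in> ideal_span {G1, G2, jac_minor (G1, G2)}" and "\<phi>2 \<in> ideal_span {G1, G2, jac_minor (G1, G2)}"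
    and "jac_minor (\<phi>1, \<phi>2) \<in> ideal_span {G1, G2, jac_minor (G1, G2)}"
proof -
  let ?I = "ideal_span {G1, G2, jac_minor (G1, G2)}"
  obtain v11 v12 v21 v22 where v:
    "v11*u11 + v12*u21 = 1" "v11*u12 + v12*u22 = 0" "v21*u11 + v22*u21 = 0" "v21*u12 + v22*u22 = 1"
    using U unfolding is_GL2_def by blast
  have G1: "G1 \<in> ?I" and G2: "G2 \<in> ?I" and JG: "jac_minor (G1, G2) \<in> ?I" by (auto intro: ideal_span_mem)
  have "\<phi>1 = v11 * G1 + v12 * G2"
  proof -
    have "v11 * G1 + v12 * G2 = (v11*u11 + v12*u21) * \<phi>1 + (v11*u12 + v12*u22) * \<phi>2"
      by (simp add: G1_def G2_def algebra_simps)
    thus ?thesis using v by simp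
  qed
  thus p1: "\<phi>1 \<in> ?I" using G1 G2 by (auto intro: ideal_span_add ideal_span_mult)
  have "\<phi>2 = v21 * G1 + v22 * G2"
  proof -
    have "v21 * G1 + v22 * G2 = (v21*u11 + v22*u21) * \<phi>1 + (v21*u12 + v22*u22) * \<phi>2"
      by (simp add: G1_def G2_def algebra_simps)
    thus ?thesis using v by simp
  qed
  thus p2: "\<phi>2 \<in> ?I" using G1 G2 by (auto intro: ideal_span_add ideal_span_mult)
  obtain e where e: "(u11 * u22 - u12 * u21) * e = 1" using U unfolding GL2_det unitp_def by blast
  define A1x where "A1x = u11 * dX \<phi>1 + u12 * dX \<phi>2"
  define A1y where "A1y = u11 * dY \<phi>1 + u12 * dY \<phi>2"
  define A2x where "A2x = u21 * dX \<phi>1 + u22 * dX \<phi>2"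
  define A2y where "A2y = u21 * dY \<phi>1 + u22 * dY \<phi>2"
  define B1x where "B1x = dX u11 * \<phi>1 + dX u12 * \<phi>2"
  define B1y where "B1y = dY u11 * \<phi>1 + dY u12 * \<phi>2"
  define B2x where "B2x = dX u21 * \<phi>1 + dX u22 * \<phi>2"
  define B2y where "B2y = dY u21 * \<phi>1 + dY u22 * \<phi>2"
  have B: "B1x \<in> ?I" "B1y \<in> ?I" "B2x \<in> ?I" "B2y \<in> ?I"
    unfolding B1x_def B1y_def B2x_def B2y_def using p1 p2 by (auto intro: ideal_span_add ideal_span_mult)
  have dG: "dX G1 = A1x + B1x" "dY G1 = A1y + B1y" "dX G2 = A2x + B2x" "dY G2 = A2y + B2y"
    by (simp_all add: G1_def G2_def A1x_def A1y_def A2x_def A2y_def B1x_def B1y_def B2x_def B2y_def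
        dX_add dY_add dX_mult dY_mult algebra_simps)
  have jG: "jac_minor (G1, G2) = (u11 * u22 - u12 * u21) * jac_minor (\<phi>1, \<phi>2)
     + ((A1x * B2y + B1x * (A2y + B2y)) - (A1y * B2x + B1y * (A2x + B2x)))"
    unfolding jac_minor_def fst_conv snd_conv dG
    by (simp add: A1x_def A1y_def A2x_def A2y_def algebra_simps)
  have R: "(A1x * B2y + B1x * (A2y + B2y)) - (A1y * B2x + B1y * (A2x + B2x)) \<in> ?I"
  proof -
    have 1: "A1x * B2y \<in> ?I" "A1y * B2x \<in> ?I" by (rule ideal_span_mult[OF B(4)], rule ideal_span_mult[OF B(3)])
    have 2: "B1x * (A2y + B2y) \<in> ?I" using ideal_span_mult[OF B(1), of "A2y + B2y"] by (simp add: mult.commute)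
    have 3: "B1y * (A2x + B2x) \<in> ?I" using ideal_span_mult[OF B(2), of "A2x + B2x"] by (simp add: mult.commute)
    show ?thesis by (rule ideal_span_diff[OF ideal_span_add[OF 1(1) 2] ideal_span_add[OF 1(2) 3]])
  qed
  have "(u11 * u22 - u12 * u21) * jac_minor (\<phi>1, \<phi>2) \<in> ?I"
    using ideal_span_diff[OF JG R] unfolding jG by simp
  hence "e * ((u11 * u22 - u12 * u21) * jac_minor (\<phi>1, \<phi>2)) \<in> ?I" by (rule ideal_span_mult)
  thus "jac_minor (\<phi>1, \<phi>2) \<in> ?I" using e by (simp add: mult.assoc[symmetric] mult.commute[of e])
qed


lemma icis_Y:
  fixes f :: "'a::field ps2 \<times> 'a ps2"
  assumes "is_ICIS f"
  shows "\<exists>k. \<forall>g. contact_equiv f g \<longrightarrow> varY ^ k \<in> ideal_span {fst g, snd g, jac_minor g}"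
proof -
  obtain k where k: "ideal_pow maxid k \<subseteq> ideal_span {fst f, snd f, jac_minor f}"
    using assms unfolding is_ICIS_def by blast
  have "varY ^ k \<in> ideal_span {fst g, snd g, jac_minor g}" if fg: "contact_equiv f g" for g
  proof -
    obtain u11 u12 u21 u22 p q where U: "is_GL2 u11 u12 u21 u22" and a: "is_aut p q"
      and g: "g = contact_act (u11, u12, u21, u22) (p, q) f" using fg unfolding contact_equiv_def by blast
    have l: "low0 1 p" "low0 1 q" using a is_aut_low by blast+
    have b: "bij (\<lambda>g. subst2 g p q)" using a by (simp add: is_aut_def)
    obtain h where h: "subst2 h p q = varY" using surjD[OF bij_is_surj[OF b], of varY] by metis
    have "coeff2 h 0 0 = 0" using coeff2_subst2_00[of h p q] h by (simp add: coeff2_Y)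
    hence "h \<in> maxid" unfolding maxid_iff low0_def by simp
    hence "h ^ k \<in> ideal_span {fst f, snd f, jac_minor f}" using k power_ideal_pow by blast
    then obtain A B C where hk: "h ^ k = A * fst f + B * snd f + C * jac_minor f"
      using ideal_span3_D by blast
    define \<phi>1 where "\<phi>1 = subst2 (fst f) p q"
    define \<phi>2 where "\<phi>2 = subst2 (snd f) p q"
    let ?I = "ideal_span {fst g, snd g, jac_minor g}"
    have gg: "g = (u11 * \<phi>1 + u12 * \<phi>2, u21 * \<phi>1 + u22 * \<phi>2)"
      unfolding g \<phi>1_def \<phi>2_def by (metis contact_act_simp prod.collapse)
    have I: "\<phi>1 \<in> ?I" "\<phi>2 \<in> ?I" "jac_minor (\<phi>1, \<phi>2) \<in> ?I"
      unfolding gg fst_conv snd_conv using jac_matrix_span[OF U] by blast+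
    obtain \<Delta>' where D: "(dX p * dY q - dY p * dX q) * \<Delta>' = 1"
      using jac_det_unit[OF a] unfolding unitp_def by blast
    have "jac_minor (\<phi>1, \<phi>2) = subst2 (jac_minor f) p q * (dX p * dY q - dY p * dX q)"
      unfolding \<phi>1_def \<phi>2_def using jac_subst[OF l, of "fst f" "snd f"] by simp
    hence "subst2 (jac_minor f) p q = jac_minor (\<phi>1, \<phi>2) * \<Delta>'"
      using D by (simp add: mult.assoc)
    hence J: "subst2 (jac_minor f) p q \<in> ?I" using ideal_span_mult[OF I(3), of \<Delta>'] by (simp add: mult.commute)
    have "varY ^ k = subst2 (h ^ k) p q" using h subst2_power[OF l] by simp
    also have "\<dots> = subst2 A p q * \<phi>1 + subst2 B p q * \<phi>2 + subst2 C p q * subst2 (jac_minor f) p q"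
      unfolding hk by (simp add: subst2_add subst2_mult[OF l] \<phi>1_def \<phi>2_def)
    finally show ?thesis using I J by (simp add: ideal_span_add ideal_span_mult)
  qed
  thus ?thesis by blast
qed

lemma coeff_X_plus_low:
  assumes "z = varX * u + r" "low0 (Suc k) r"
  shows "coeff2 (a * z) 0 k = 0"
proof -
  have "a * z = varX * (a * u) + a * r" using assms(1) by (simp add: algebra_simps)
  moreover have "coeff2 (a * r) 0 k = 0" using low0_mult_left[OF assms(2), of a] by (simp add: low0_def)
  ultimately show ?thesis by (simp add: coeff2_X_mult0)
qed

lemma noY:
  fixes g1 g2 :: "'a::field ps2"
  assumes h1: "low0 K (g1 - varX ^ 3)" and h2: "low0 K (g2 - varX * varY ^ 2)"
    and Y: "varY ^ k \<in> ideal_span {g1, g2, jac_minor (g1, g2)}" and K: "Suc (Suc k) \<le> K"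
  shows False
proof -
  obtain a b c where e: "varY ^ k = a * g1 + b * g2 + c * jac_minor (g1, g2)" using ideal_span3_D[OF Y] by blast
  define e1 where "e1 = g1 - varX ^ 3"
  define e2 where "e2 = g2 - varX * varY ^ 2"
  have l1: "low0 (Suc k) e1" "low0 (Suc k) e2" using h1 h2 K unfolding e1_def e2_def by (auto elim: low0_mono)
  have K1: "K = Suc (K - 1)" using K by simp
  have d: "low0 (Suc k) (dX e1)" "low0 (Suc k) (dY e1)" "low0 (Suc k) (dX e2)" "low0 (Suc k) (dY e2)"
    using low0_dX[of "K - 1" e1] low0_dY[of "K - 1" e1] low0_dX[of "K - 1" e2] low0_dY[of "K - 1" e2]
      h1 h2 K1 K unfolding e1_def e2_def by (auto elim!: low0_mono)
  have c1: "coeff2 (a * g1) 0 k = 0"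
    by (rule coeff_X_plus_low[of _ "varX ^ 2" e1], simp add: e1_def power3_eq_cube power2_eq_square, rule l1(1))
  have c2: "coeff2 (b * g2) 0 k = 0"
    by (rule coeff_X_plus_low[of _ "varY ^ 2" e2], simp add: e2_def, rule l1(2))
  have dx1: "dX g1 = 3 * varX ^ 2 + dX e1" unfolding e1_def
    by (simp add: dX_diff dX_power dX_X)
  have dy1: "dY g1 = dY e1" unfolding e1_def by (simp add: dY_diff dY_power dY_X)
  have dx2: "dX g2 = varY ^ 2 + dX e2" unfolding e2_def
    by (simp add: dX_diff dX_mult dX_power dX_X dX_Y)
  have dy2: "dY g2 = varX * (2 * varY) + dY e2" unfolding e2_def
    by (simp add: dY_diff dY_mult dY_power dY_Y dY_X)
  have c3: "coeff2 (c * jac_minor (g1, g2)) 0 k = 0"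
  proof (rule coeff_X_plus_low)
    show "jac_minor (g1, g2) = varX * (3 * varX * (varX * (2 * varY) + dY e2)) +
      (dX e1 * (varX * (2 * varY) + dY e2) - dY e1 * (varY ^ 2 + dX e2))"
      unfolding jac_minor_def fst_conv snd_conv dx1 dy1 dx2 dy2 by (simp add: algebra_simps power2_eq_square)
    show "low0 (Suc k) (dX e1 * (varX * (2 * varY) + dY e2) - dY e1 * (varY ^ 2 + dX e2))"
      using d by (intro low0_diff low0_mult_right)
  qed
  have "coeff2 (varY ^ k :: 'a ps2) 0 k = 1" using coeff2_Ypow_mult[of k "1::'a ps2" 0 k] by (simp add: coeff2_1)
  moreover have "coeff2 (varY ^ k :: 'a ps2) 0 k = 0" unfolding e using c1 c2 c3 by simp
  ultimately show False by simp
qed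



section \<open>Determinacy\<close>

lemma pow_split: "a + b = c \<Longrightarrow> x ^ a * x ^ b = (x::'a::monoid_mult) ^ c"
  by (metis power_add)

definition Kset :: "nat \<Rightarrow> 'a::comm_ring_1 ps2 set" where
  "Kset r = {a * (varX ^ 3 + varY ^ r) + b * (varX * varY ^ 2) | a b. low0 1 a \<and> low0 1 b}"

lemma K_add: "x \<in> Kset r \<Longrightarrow> y \<in> Kset r \<Longrightarrow> x + y \<in> Kset r"
proof -
  assume "x \<in> Kset r" "y \<in> Kset r"
  then obtain a b a' b' where "x = a * (varX ^ 3 + varY ^ r) + b * (varX * varY ^ 2)" "low0 1 a" "low0 1 b"
    "y = a' * (varX ^ 3 + varY ^ r) + b' * (varX * varY ^ 2)" "low0 1 a'" "low0 1 b'"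
    unfolding Kset_def by blast
  thus ?thesis unfolding Kset_def
    by (intro CollectI exI[of _ "a + a'"] exI[of _ "b + b'"]) (simp add: algebra_simps low0_add)
qed

lemma K_mult: "x \<in> Kset r \<Longrightarrow> z * x \<in> Kset r"
proof -
  assume "x \<in> Kset r"
  then obtain a b where "x = a * (varX ^ 3 + varY ^ r) + b * (varX * varY ^ 2)" "low0 1 a" "low0 1 b"
    unfolding Kset_def by blast
  hence "z * x = (z * a) * (varX ^ 3 + varY ^ r) + (z * b) * (varX * varY ^ 2) \<and> low0 1 (z * a) \<and> low0 1 (z * b)"
    by (simp add: algebra_simps low0_mult_left low0_mult_right)
  thus ?thesis unfolding Kset_def by blast
qed

lemma K_diff: "x \<in> Kset r \<Longrightarrow> y \<in> Kset r \<Longrightarrow> x - y \<in> Kset r"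
  using K_add[of x r "(-1) * y"] K_mult[of y r "-1"] by simp

lemma K_XY2: "low0 1 \<beta> \<Longrightarrow> varX * varY ^ 2 * \<beta> \<in> Kset r"
  unfolding Kset_def by (intro CollectI exI[of _ 0] exI[of _ \<beta>]) (simp add: mult.commute)

lemma K_t1: "low0 1 \<alpha> \<Longrightarrow> \<alpha> * (varX ^ 3 + varY ^ r) \<in> Kset r"
  unfolding Kset_def by (intro CollectI exI[of _ \<alpha>] exI[of _ 0]) simp

lemma K_Ypow:
  assumes "r + 2 \<le> m" shows "(varY ^ m :: 'a::comm_ring_1 ps2) \<in> Kset r"
proof -
  have e: "(varY ^ m :: 'a ps2) = varY ^ (m - r) * (varX ^ 3 + varY ^ r) - (varX ^ 2 * varY ^ (m - r - 2)) * (varX * varY ^ 2)"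
  proof -
    have "(varY ^ (m - r) * varY ^ r :: 'a ps2) = varY ^ m" using assms by (intro pow_split) simp
    moreover have "(varY ^ (m - r - 2) * varY ^ 2 :: 'a ps2) = varY ^ (m - r)" using assms by (intro pow_split) simp
    ultimately show ?thesis by (simp add: algebra_simps power3_eq_cube power2_eq_square)
  qed
  have l1: "low0 1 (varY ^ (m - r) :: 'a ps2)" by (rule low0_mono[OF low0_Ypow]) (use assms in simp)
  have l2: "low0 1 (- (varX ^ 2 * varY ^ (m - r - 2)) :: 'a ps2)"
    using low0_mult[OF low0_Xpow[of 2] low0_Ypow[of "m - r - 2"]] by (intro low0_uminus) (rule low0_mono, auto)
  show ?thesis unfolding Kset_def using e l1 l2
    by (intro CollectI exI[of _ "varY ^ (m - r)"] exI[of _ "- (varX ^ 2 * varY ^ (m - r - 2))"]) simp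
qed

lemma K_X3:
  assumes r: "4 \<le> r" and a: "low0 (r + 1) \<alpha>"
  shows "varX ^ 3 * \<alpha> \<in> Kset r"
proof -
  define \<alpha>1 where "\<alpha>1 = mk2 (\<lambda>a b. coeff2 \<alpha> (a + 1) b)"
  define \<alpha>2 where "\<alpha>2 = mk2 (\<lambda>a b. if a = 0 then coeff2 \<alpha> 0 (b + (r + 1)) else 0)"
  have dec: "\<alpha> = varX * \<alpha>1 + varY ^ (r + 1) * \<alpha>2"
  proof (rule coeff2_ext)
    fix i j
    show "coeff2 \<alpha> i j = coeff2 (varX * \<alpha>1 + varY ^ (r + 1) * \<alpha>2) i j"
      using a unfolding coeff2_add coeff2_X_mult coeff2_Ypow_mult \<alpha>1_def \<alpha>2_def coeff2_mk2 low0_def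
      by (cases i) auto
  qed
  have l1: "low0 1 \<alpha>" using a by (rule low0_mono) simp
  have "varX ^ 3 * \<alpha> = \<alpha> * (varX ^ 3 + varY ^ r) - (varX * varY ^ 2 * (varY ^ (r - 2) * \<alpha>1) + varY ^ (2 * r + 1) * \<alpha>2)"
  proof -
    have "varY ^ r * (varX * \<alpha>1) = varX * varY ^ 2 * (varY ^ (r - 2) * \<alpha>1)"
    proof -
      have "(varY ^ 2 * varY ^ (r - 2) :: 'a ps2) = varY ^ r" using r by (intro pow_split) simp
      thus ?thesis by (metis (no_types, lifting) mult.assoc mult.commute)
    qed
    moreover have "varY ^ r * (varY ^ (r + 1) * \<alpha>2) = varY ^ (2 * r + 1) * \<alpha>2"
    proof -
      have "(varY ^ r * varY ^ (r + 1) :: 'a ps2) = varY ^ (2 * r + 1)" by (intro pow_split) simp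
      thus ?thesis by (simp only: mult.assoc[symmetric])
    qed
    moreover have "varY ^ r * (varX * \<alpha>1) + varY ^ r * (varY ^ (r + 1) * \<alpha>2) = varY ^ r * \<alpha>"
      unfolding distrib_left[symmetric] dec[symmetric] ..
    ultimately have "varX * varY ^ 2 * (varY ^ (r - 2) * \<alpha>1) + varY ^ (2 * r + 1) * \<alpha>2 = varY ^ r * \<alpha>"
      by simp
    thus ?thesis by (simp add: algebra_simps)
  qed
  moreover have "varX * varY ^ 2 * (varY ^ (r - 2) * \<alpha>1) \<in> Kset r"
    by (rule K_XY2) (rule low0_mono[OF low0_Ypow_mult[of 0 \<alpha>1 "r - 2"]], simp, use r in simp)
  moreover have "varY ^ (2 * r + 1) * \<alpha>2 \<in> Kset r"
  proof -
    have "r + 2 \<le> 2 * r + 1" using r by simp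
    from K_mult[OF K_Ypow[OF this], of \<alpha>2] show ?thesis by (simp only: mult.commute)
  qed
  ultimately show ?thesis using K_t1[OF l1] by (auto intro: K_diff K_add)
qed

lemma KD:
  assumes r: "4 \<le> r" and n: "r + 4 \<le> n" and E: "low0 n E"
  shows "E \<in> Kset r"
proof -
  have n4: "4 \<le> n" using r n by simp
  obtain \<alpha> \<beta> \<gamma> where d: "E = varX ^ 3 * \<alpha> + varX * varY ^ 2 * \<beta> + varY ^ n * \<gamma>"
    "low0 (n - 3) \<alpha>" "low0 (n - 3) \<beta>" using dec3[OF n4 E] by blast
  have "varX ^ 3 * \<alpha> \<in> Kset r" using r d(2) n by (intro K_X3) (auto elim: low0_mono)
  moreover have "varX * varY ^ 2 * \<beta> \<in> Kset r" using d(3) n by (intro K_XY2) (auto elim: low0_mono)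
  moreover have "varY ^ n * \<gamma> \<in> Kset r" using K_mult[OF K_Ypow[of r n], of \<gamma>] n by (simp add: mult.commute)
  ultimately show ?thesis unfolding d(1) by (intro K_add)
qed



lemma det_final:
  fixes E1 E2 :: "'a::field ps2"
  assumes r: "4 \<le> r" and N: "r + 4 \<le> N" and e1: "low0 N E1" and e2: "low0 N E2"
  shows "contact_equiv (varX ^ 3 + varY ^ r + E1, varX * varY ^ 2 + E2) (varX ^ 3 + varY ^ r, varX * varY ^ 2)"
proof -
  define t1 where "t1 = (varX ^ 3 + varY ^ r :: 'a ps2)"
  define t2 where "t2 = (varX * varY ^ 2 :: 'a ps2)"
  obtain a1 b1 where k1: "E1 = a1 * t1 + b1 * t2" "low0 1 a1" "low0 1 b1"
    using KD[OF r N e1] unfolding Kset_def t1_def t2_def by blast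
  obtain a2 b2 where k2: "E2 = a2 * t1 + b2 * t2" "low0 1 a2" "low0 1 b2"
    using KD[OF r N e2] unfolding Kset_def t1_def t2_def by blast
  define dt where "dt = (1 + a1) * (1 + b2) - b1 * a2"
  have "coeff2 dt 0 0 = 1" using k1 k2 by (simp add: dt_def coeff2_mult00 coeff2_1 low0_def)
  then obtain e where e: "dt * e = 1" using unitp_coeff[of dt] unfolding unitp_def by auto
  define m11 where "m11 = (1 + b2) * e"
  define m12 where "m12 = - b1 * e"
  define m21 where "m21 = - a2 * e"
  define m22 where "m22 = (1 + a1) * e"
  have "m11 * m22 - m12 * m21 = (dt * e) * e" by (simp add: m11_def m12_def m21_def m22_def dt_def algebra_simps)
  hence "(m11 * m22 - m12 * m21) * dt = 1" using e by (simp add: algebra_simps)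
  hence GL: "is_GL2 m11 m12 m21 m22" unfolding GL2_det unitp_def by blast
  have G1: "t1 + E1 = (1 + a1) * t1 + b1 * t2" and G2: "t2 + E2 = a2 * t1 + (1 + b2) * t2"
    using k1 k2 by (simp_all add: algebra_simps)
  have c1: "m11 * (t1 + E1) + m12 * (t2 + E2) = (dt * e) * t1"
    unfolding G1 G2 m11_def m12_def dt_def by (simp add: algebra_simps)
  have c2: "m21 * (t1 + E1) + m22 * (t2 + E2) = (dt * e) * t2"
    unfolding G1 G2 m21_def m22_def dt_def by (simp add: algebra_simps)
  have "contact_act (m11, m12, m21, m22) (varX, varY) (t1 + E1, t2 + E2) = (t1, t2)"
    unfolding contact_act_simp fst_conv snd_conv subst2_id c1 c2 e by simp
  thus ?thesis unfolding contact_equiv_def t1_def t2_def using GL is_aut_id by metis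
qed

definition pureY :: "'a::comm_ring_1 ps2 \<Rightarrow> bool" where
  "pureY w \<longleftrightarrow> (\<forall>i j. 0 < i \<longrightarrow> coeff2 w i j = 0)"

lemma pureY_mult:
  assumes "pureY a" "pureY b" shows "pureY (a * b)"
  unfolding pureY_def coeff2_mult
proof (intro allI impI)
  fix i j :: nat assume i: "0 < i"
  have z: "coeff2 a i' j' * coeff2 b (i - i') (j - j') = 0" if "i' \<le> i" for i' j'
    using assms i that unfolding pureY_def by (cases "i' = 0") auto
  show "(\<Sum>j'\<le>j. \<Sum>i'\<le>i. coeff2 a i' j' * coeff2 b (i - i') (j - j')) = 0"
    by (intro sum.neutral ballI) (auto simp: z)
qed

lemma pureY_add: "pureY a \<Longrightarrow> pureY b \<Longrightarrow> pureY (a + b)"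
  and pureY_diff: "pureY a \<Longrightarrow> pureY b \<Longrightarrow> pureY (a - b)"
  and pureY_cst: "pureY (cst c)"
  and pureY_Y: "pureY varY"
  by (auto simp: pureY_def coeff2_cst coeff2_Y)

lemma pureY_power: "pureY a \<Longrightarrow> pureY (a ^ n)"
  by (induction n) (auto simp: pureY_mult pureY_cst[of 1, simplified])

lemma pureY_subst:
  assumes w: "pureY w" and p: "low0 1 p"
  shows "subst2 w p varY = w"
proof (rule low0_eqI)
  fix n
  have t: "subst2 (trunc n w) p varY = trunc n w"
    unfolding subst2_trunc[OF p low0_Y] unfolding trunc_def
  proof (rule sum.cong[OF refl])
    fix x assume "x \<in> tri n"
    show "(case x of (i, j) \<Rightarrow> cst (coeff2 w i j) * (p ^ i * varY ^ j)) = (case x of (i, j) \<Rightarrow> cst (coeff2 w i j) * mon i j)"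
      using w unfolding pureY_def by (cases x; cases "fst x = 0") (auto simp: mon_def)
  qed
  have "subst2 w p varY - w = (subst2 w p varY - subst2 (trunc n w) p varY) - (w - trunc n w)"
    using t by simp
  thus "low0 (Suc n) (subst2 w p varY - w)"
    using subst2_approx[of n w p varY] low0_trunc[of n w] by (simp only: low0_diff)
qed

lemma coeff2_mult01: "coeff2 (a * b) 0 1 = coeff2 a 0 0 * coeff2 b 0 1 + coeff2 a 0 1 * coeff2 b 0 0"
  by (simp add: coeff2_mult)

lemma cube_root:
  fixes a0 :: "'a::field"
  assumes "alg_closed_type TYPE('a)"
  shows "\<exists>l. l ^ 3 = a0"
proof -
  let ?p = "[:- a0, 0, 0, 1:] :: 'a poly"
  have "degree ?p = 3" by simp
  moreover have "\<forall>p::'a poly. degree p \<ge> 1 \<longrightarrow> (\<exists>z. poly p z = 0)"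
    using assms unfolding alg_closed_type_def by blast
  ultimately have "\<exists>z. poly ?p z = 0" by (metis one_le_numeral)
  then obtain z where "poly ?p z = 0" by blast
  hence "z ^ 3 = a0" by (simp add: algebra_simps power3_eq_cube)
  thus ?thesis by blast
qed



lemma final:
  fixes g :: "'a::field ps2 \<times> 'a ps2"
  assumes alg: "alg_closed_type TYPE('a)" and three: "(3::'a) \<noteq> 0" and r: "4 \<le> r" and N: "r + 4 \<le> N"
    and w: "pureY w" and w0: "coeff2 w 0 0 \<noteq> 0"
    and h1: "low0 N (fst g - varX ^ 3 - varY ^ r * w)" and h2: "low0 N (snd g - varX * varY ^ 2)"
  shows "contact_equiv g (varX ^ 3 + varY ^ r, varX * varY ^ 2)"
proof -
  define a0 where "a0 = coeff2 w 0 0"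
  define a1 where "a1 = coeff2 w 0 1"
  obtain l where l: "l ^ 3 = a0" using cube_root[OF alg] by blast
  have l0: "l \<noteq> 0" using l w0 a0_def by auto
  define mu where "mu = a1 / (3 * a0)"
  define s where "s = cst l + cst (l * mu) * varY"
  have sp: "pureY s" unfolding s_def by (intro pureY_add pureY_mult pureY_cst pureY_Y)
  have s00: "coeff2 s 0 0 = l" and s01: "coeff2 s 0 1 = l * mu"
    by (simp_all add: s_def coeff2_cst coeff2_Y)
  have c00: "coeff2 (s ^ 3) 0 0 = a0"
    using l by (simp add: power3_eq_cube coeff2_mult00 s00)
  have c01: "coeff2 (s ^ 3) 0 1 = a1"
  proof -
    have "coeff2 (s ^ 3) 0 1 = 3 * l ^ 3 * mu"
      unfolding power3_eq_cube coeff2_mult01 coeff2_mult00 s00 s01 by (simp add: algebra_simps)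
    also have "\<dots> = a1" using l three w0 by (simp add: mu_def a0_def field_simps)
    finally show ?thesis .
  qed
  define D where "D = mk2 (\<lambda>a b. coeff2 (s ^ 3 - w) a (b + 2))"
  have s3p: "pureY (s ^ 3)" using sp by (rule pureY_power)
  have sD: "s ^ 3 = w + varY ^ 2 * D"
  proof (rule coeff2_ext)
    fix i j
    have jj: "Suc (Suc (j - 2)) = j" if "\<not> j < 2" using that by simp
    show "coeff2 (s ^ 3) i j = coeff2 (w + varY ^ 2 * D) i j"
    proof (cases "j < 2")
      case True
      show ?thesis
      proof (cases "i = 0")
        case True
        thus ?thesis using \<open>j < 2\<close> c00 c01 by (cases j) (auto simp: coeff2_Ypow_mult a0_def a1_def)
      next
        case False
        thus ?thesis using w s3p \<open>j < 2\<close> by (simp add: pureY_def coeff2_Ypow_mult)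
      qed
    next
      case False
      thus ?thesis by (simp add: coeff2_Ypow_mult D_def jj)
    qed
  qed
  define v where "v = inv2 w"
  have vw: "w * v = 1" unfolding v_def by (rule inv2[OF w0])
  define s' where "s' = inv2 s"
  have ss: "s * s' = 1" unfolding s'_def by (rule inv2) (simp add: s00 l0)
  define p where "p = varX * s"
  define P where "P = varX * s'"
  have lp: "low0 1 p" unfolding p_def using low0_mult[OF low0_X, of 0 s] by simp
  have lP: "low0 1 P" unfolding P_def using low0_mult[OF low0_X, of 0 s'] by simp
  have chis: "subst2 s p varY = s" and chiw: "subst2 w p varY = w" and chis2: "subst2 s P varY = s"
    using pureY_subst[OF sp lp] pureY_subst[OF w lp] pureY_subst[OF sp lP] by blast+
  have chis': "subst2 s' p varY = s'"
  proof -
    have "s * subst2 s' p varY = 1"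
      using subst2_mult[OF lp low0_Y, of s s'] ss subst2_one[OF lp low0_Y] chis by simp
    hence "s' * (s * subst2 s' p varY) = s'" by simp
    thus ?thesis using ss by (simp add: mult.assoc[symmetric] mult.commute[of s'])
  qed
  have aut: "is_aut p varY"
  proof (rule is_aut_inv[OF lp low0_Y lP low0_Y])
    show "subst2 p P varY = varX" unfolding p_def
      unfolding subst2_mult[OF lP low0_Y] subst2_X[OF lP low0_Y] chis2 unfolding P_def
      by (simp add: mult.assoc mult.commute[of s'] ss)
    show "subst2 varY P varY = varY" by (rule subst2_Y[OF lP low0_Y])
    show "subst2 P p varY = varX" unfolding P_def
      unfolding subst2_mult[OF lp low0_Y] subst2_X[OF lp low0_Y] chis' unfolding p_def
      by (simp add: mult.assoc ss)
    show "subst2 varY p varY = varY" by (rule subst2_Y[OF lp low0_Y])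
  qed
  define e1 where "e1 = fst g - varX ^ 3 - varY ^ r * w"
  define e2 where "e2 = snd g - varX * varY ^ 2"
  define E1 where "E1 = subst2 e1 p varY"
  define E2 where "E2 = subst2 e2 p varY"
  have g1: "subst2 (fst g) p varY = varX ^ 3 * s ^ 3 + varY ^ r * w + E1"
  proof -
    have "fst g = varX ^ 3 + varY ^ r * w + e1" by (simp add: e1_def)
    hence "subst2 (fst g) p varY = p ^ 3 + varY ^ r * w + E1"
      by (simp add: subst2_add subst2_mult[OF lp low0_Y] subst2_power[OF lp low0_Y]
          subst2_X[OF lp low0_Y] subst2_Y[OF lp low0_Y] chiw E1_def)
    thus ?thesis by (simp add: p_def power_mult_distrib)
  qed
  have g2: "subst2 (snd g) p varY = varX * s * varY ^ 2 + E2"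
  proof -
    have "snd g = varX * varY ^ 2 + e2" by (simp add: e2_def)
    hence "subst2 (snd g) p varY = p * varY ^ 2 + E2"
      by (simp add: subst2_add subst2_mult[OF lp low0_Y] subst2_power[OF lp low0_Y]
          subst2_X[OF lp low0_Y] subst2_Y[OF lp low0_Y] E2_def)
    thus ?thesis by (simp add: p_def)
  qed
  define u12 where "u12 = - (v * varX ^ 2 * D * s')"
  have GL: "is_GL2 v u12 0 s'"
  proof -
    have "(v * s' - u12 * 0) * (w * s) = 1" using vw ss by (simp add: algebra_simps)
    thus ?thesis unfolding GL2_det unitp_def by blast
  qed
  define G where "G = contact_act (v, u12, 0, s') (p, varY) g"
  have Gg: "contact_equiv g G" unfolding G_def contact_equiv_def using GL aut by blast
  have G1: "fst G = varX ^ 3 + varY ^ r + (v * E1 - v * varX ^ 2 * D * s' * E2)"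
  proof -
    have "fst G = v * (varX ^ 3 * (w + varY ^ 2 * D) + varY ^ r * w + E1) + u12 * (varX * s * varY ^ 2 + E2)"
      unfolding G_def contact_act_simp fst_conv g1 g2 sD ..
    also have "\<dots> = varX ^ 3 * (w * v) + varY ^ r * (w * v) + v * varX ^ 3 * varY ^ 2 * D * (1 - s * s')
        + (v * E1 - v * varX ^ 2 * D * s' * E2)"
      unfolding u12_def by (simp add: algebra_simps power2_eq_square power3_eq_cube)
    finally show ?thesis using vw ss by simp
  qed
  have G2: "snd G = varX * varY ^ 2 + s' * E2"
  proof -
    have "snd G = 0 * (varX ^ 3 * s ^ 3 + varY ^ r * w + E1) + s' * (varX * s * varY ^ 2 + E2)"
      unfolding G_def contact_act_simp snd_conv g1 g2 ..
    also have "\<dots> = varX * varY ^ 2 * (s * s') + s' * E2" by (simp add: algebra_simps)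
    finally show ?thesis using ss by simp
  qed
  have lE1: "low0 N E1" and lE2: "low0 N E2"
    using h1 h2 unfolding E1_def E2_def e1_def e2_def by (simp_all add: subst2_preserve)
  have "low0 N (v * E1 - v * varX ^ 2 * D * s' * E2)" "low0 N (s' * E2)"
    using lE1 lE2 by (auto intro!: low0_diff low0_mult_left)
  from det_final[OF r N this] have "contact_equiv G (varX ^ 3 + varY ^ r, varX * varY ^ 2)"
    using G1 G2 by (metis prod.collapse)
  thus ?thesis using Gg contact_equiv_trans by blast
qed



theorem proposition5p5:
  fixes f :: "'a::field ps2 \<times> 'a ps2"
  assumes "alg_closed_type TYPE('a)"
    and "CHAR('a) > 3"
    and "is_ICIS f"
    and "jet3_contact_equiv f (varX ^ 3, varX * varY ^ 2)"
  shows "\<exists>r\<ge>4. contact_equiv f (varX ^ 3 + varY ^ r, varX * varY ^ 2)"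
proof -
  have three: "(3::'a) \<noteq> 0"
  proof
    assume "(3::'a) = 0"
    hence "of_nat 3 = (0::'a)" by simp
    hence "CHAR('a) dvd 3" by (simp only: of_nat_eq_0_iff_char_dvd)
    hence "CHAR('a) \<le> 3" by (rule dvd_imp_le) simp
    thus False using assms(2) by simp
  qed
  obtain u11 u12 u21 u22 p q where U: "is_GL2 u11 u12 u21 u22" "is_aut p q"
    and j1: "varX ^ 3 - fst (contact_act (u11, u12, u21, u22) (p, q) f) \<in> ideal_pow maxid 4"
    and j2: "varX * varY ^ 2 - snd (contact_act (u11, u12, u21, u22) (p, q) f) \<in> ideal_pow maxid 4"
    using assms(4) unfolding jet3_contact_equiv_def Let_def fst_conv snd_conv by blast
  define h where "h = contact_act (u11, u12, u21, u22) (p, q) f"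
  have fh: "contact_equiv f h" unfolding h_def contact_equiv_def using U by blast
  have h1: "low0 4 (fst h - varX ^ 3)"
    using low0_uminus[OF ideal_pow_low0[OF j1]] unfolding h_def by simp
  have h2: "low0 4 (snd h - varX * varY ^ 2)"
    using low0_uminus[OF ideal_pow_low0[OF j2]] unfolding h_def by simp
  obtain k where k: "\<And>g. contact_equiv f g \<Longrightarrow> varY ^ k \<in> ideal_span {fst g, snd g, jac_minor g}"
    using icis_Y[OF assms(3)] by blast
  define N where "N = k + 6"
  obtain g c where g: "contact_equiv f g" "low0 N (fst g - varX ^ 3 - Psum c N)" "low0 N (snd g - varX * varY ^ 2)"
    using iter[OF fh h1 h2, of N] unfolding N_def by auto
  have Yk: "varY ^ k \<in> ideal_span {fst g, snd g, jac_minor (fst g, snd g)}" using k[OF g(1)] by simp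
  show ?thesis
  proof (cases "\<exists>j. 4 \<le> j \<and> j < k + 2 \<and> c j \<noteq> 0")
    case False
    have "low0 (k + 2) (Psum c N)"
      using False unfolding low0_def coeff2_Psum by auto
    moreover have "low0 (k + 2) (fst g - varX ^ 3 - Psum c N)" using g(2) by (rule low0_mono) (simp add: N_def)
    ultimately have "low0 (k + 2) ((fst g - varX ^ 3 - Psum c N) + Psum c N)" by (intro low0_add)
    hence a: "low0 (k + 2) (fst g - varX ^ 3)" by simp
    have b: "low0 (k + 2) (snd g - varX * varY ^ 2)" using g(3) by (rule low0_mono) (simp add: N_def)
    show ?thesis using noY[OF a b Yk] by simp
  next
    case True
    define r where "r = (LEAST j. 4 \<le> j \<and> j < k + 2 \<and> c j \<noteq> 0)"
    have rP: "4 \<le> r \<and> r < k + 2 \<and> c r \<noteq> 0" unfolding r_def using True by (rule LeastI_ex)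
    have rmin: "c j = 0" if "4 \<le> j" "j < r" for j
    proof (rule ccontr)
      assume "c j \<noteq> 0"
      hence "r \<le> j" unfolding r_def using that rP by (intro Least_le) simp
      thus False using that by simp
    qed
    define w where "w = mk2 (\<lambda>a b. if a = 0 then coeff2 (Psum c N) 0 (b + r) else (0::'a))"
    have wp: "pureY w" by (simp add: pureY_def w_def)
    have w0: "coeff2 w 0 0 \<noteq> 0" using rP by (simp add: w_def coeff2_Psum N_def)
    have Pw: "Psum c N = varY ^ r * w"
    proof (rule coeff2_ext)
      fix a b
      show "coeff2 (Psum c N) a b = coeff2 (varY ^ r * w) a b"
        unfolding coeff2_Ypow_mult w_def coeff2_mk2 coeff2_Psum using rmin by auto
    qed
    have "contact_equiv g (varX ^ 3 + varY ^ r, varX * varY ^ 2)"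
      using final[OF assms(1) three _ _ wp w0, of r N g] g(2,3) rP unfolding Pw by (simp add: N_def)
    thus ?thesis using g(1) contact_equiv_trans rP by blast
  qed
qed


end
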